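(* Let $1<\alpha<2$ and let $\{G(n)\}$ satisfy conditions (A) and (PL) with this $\alpha$, slowly varying $L$ and $\varepsilon_0\in(0,1/2)$; let $\varepsilon_1\in(0,\varepsilon_0)$ and let $m=m(n)\to\infty$ be arbitrary. Then $$\omega(G_2)=|V_2|(1-o_P(1))=(1-o_P(1))(1-\alpha/2)^{-\alpha/2}K(n),$$ where $K(n)=L\big((n\ln n)^{1/2}\big)n^{1-\alpha/2}(\ln n)^{-\alpha/2}$.
   Context: Random intersection graph: given positive integers $n,m$ and a probability measure $P$ on $\{0,\dots,m\}$, $G(n,m,P)$ has vertex set $V=[n]$ and attribute set $W=\{w_1,\dots,w_m\}$; independent random subsets $S_1,\dots,S_n\subseteq W$ with $\mathbb P(S_v=S)=P(|S|)/\binom{m}{|S|}$; distinct $u,v$ adjacent iff $S_u\cap S_v\ne\emptyset$; $X_v=|S_v|$. For a sequence $G(n)=G(n,m(n),P(n))$, $X(n)$ has law $P(n)$ and $Y(n)=(n/m)^{1/2}X(n)$. Condition (A): $\mathbb E\,Y(n)=O(1)$. Condition (PL): for every sequence $x_n$ with $n^{1/2-\varepsilon_0}\le x_n\le n^{1/2+\varepsilon_0}$, $\mathbb P(Y(n)\ge x_n)\sim L(x_n)x_n^{-\alpha}$, where $L$ is slowly varying ($L(tx)/L(x)\to1$ as $x\to\infty$ for each $t>0$). Thresholds: $\theta_1=m^{1/2}n^{-\varepsilon_1}$, $\theta_2=\big((1-\alpha/2)m\ln n+m e_1\big)^{1/2}$ with $e_1=\max\{0,\ln L((n\ln n)^{1/2})\}$.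 $V_0=\{v: X_v<\theta_1\}$, $V_1=\{v:\theta_1\le X_v\le\theta_2\}$, $V_2=\{v: X_v>\theta_2\}$, and $G_i$ is the subgraph of $G(n)$ induced by $V_i$. *)

theory Defs
  imports "HOL-Probability.Probability" "HOL-Library.Landau_Symbols"
begin

text \<open>Law of a single random attribute set S_v on W = {1..m}: first draw its size k
  according to P, then a uniformly random k-subset of W. Hence
  P(S_v = S) = P(|S|) / (m choose |S|).\<close>
definition attr_pmf :: "nat \<Rightarrow> nat pmf \<Rightarrow> nat set pmf" where
  "attr_pmf m P = bind_pmf P (\<lambda>k. pmf_of_set {S. S \<subseteq> {1..m} \<and> card S = k})"

text \<open>The random intersection graph G(n,m,P): independent attribute sets S_1..S_n
  (the value outside [n] is the dummy empty set).\<close>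
definition RIG :: "nat \<Rightarrow> nat \<Rightarrow> nat pmf \<Rightarrow> (nat \<Rightarrow> nat set) pmf" where
  "RIG n m P = Pi_pmf {1..n} {} (\<lambda>_. attr_pmf m P)"

definition adj :: "(nat \<Rightarrow> nat set) \<Rightarrow> nat \<Rightarrow> nat \<Rightarrow> bool" where
  "adj S u v \<longleftrightarrow> u \<noteq> v \<and> S u \<inter> S v \<noteq> {}"

definition is_clique :: "(nat \<Rightarrow> nat set) \<Rightarrow> nat set \<Rightarrow> bool" where
  "is_clique S C \<longleftrightarrow> (\<forall>u\<in>C. \<forall>v\<in>C. u \<noteq> v \<longrightarrow> adj S u v)"

definition clique_number :: "(nat \<Rightarrow> nat set) \<Rightarrow> nat set \<Rightarrow> nat" where
  "clique_number S A = Max {card C | C. C \<subseteq> A \<and> is_clique S C}"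

definition slowly_varying :: "(real \<Rightarrow> real) \<Rightarrow> bool" where
  "slowly_varying L \<longleftrightarrow> (\<forall>t>0. ((\<lambda>x. L (t * x) / L x) \<longlongrightarrow> 1) at_top)"

definition theta2 :: "real \<Rightarrow> (real \<Rightarrow> real) \<Rightarrow> nat \<Rightarrow> nat \<Rightarrow> real" where
  "theta2 \<alpha> L n m = sqrt ((1 - \<alpha>/2) * real m * ln (real n)
      + real m * max 0 (ln (L (sqrt (real n * ln (real n))))))"

definition V2 :: "real \<Rightarrow> (real \<Rightarrow> real) \<Rightarrow> nat \<Rightarrow> nat \<Rightarrow> (nat \<Rightarrow> nat set) \<Rightarrow> nat set" where
  "V2 \<alpha> L n m S = {v \<in> {1..n}. real (card (S v)) > theta2 \<alpha> L n m}"

definition o_P :: "(nat \<Rightarrow> 'a pmf) \<Rightarrow> (nat \<Rightarrow> 'a \<Rightarrow> real) \<Rightarrow> bool" where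
  "o_P M \<xi> \<longleftrightarrow> (\<forall>\<epsilon>>0. ((\<lambda>n. measure_pmf.prob (M n) {\<omega>. \<bar>\<xi> n \<omega>\<bar> > \<epsilon>}) \<longlongrightarrow> 0) sequentially)"

definition K :: "real \<Rightarrow> (real \<Rightarrow> real) \<Rightarrow> nat \<Rightarrow> real" where
  "K \<alpha> L n = L (sqrt (real n * ln (real n))) * real n powr (1 - \<alpha>/2) * ln (real n) powr (- \<alpha>/2)"

end

theory Submission
  imports Defs "HOL-Real_Asymp.Real_Asymp"
begin

lemma choose_Suc_rel: "real (Suc k) * real (N choose Suc k) = (real N - real k) * real (N choose k)"
proof (cases "k \<le> N")
  case True
  have "Suc k * (N choose Suc k) = (N - k) * (N choose k)"
    by (metis binomial_absorption binomial_absorb_comp)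
  then have "real (Suc k * (N choose Suc k)) = real ((N - k) * (N choose k))" by simp
  then show ?thesis using True by (simp add: of_nat_diff ring_distribs)
next
  case False
  then have "N choose k = 0" "N choose Suc k = 0" by auto
  then show ?thesis by (simp only: of_nat_0 mult_zero_right)
qed

lemma choose_ratio:
  assumes "a \<le> m" "0 < m"
  shows "real ((m - a) choose k) \<le> (1 - real a / real m)^k * real (m choose k)"
proof (induction k)
  case 0
  then show ?case by simp
next
  case (Suc k)
  have q0: "0 \<le> 1 - real a / real m" using assms by (simp add: field_simps)
  have e1: "real (Suc k) * real ((m-a) choose Suc k) = (real (m-a) - real k) * real ((m-a) choose k)"
    by (rule choose_Suc_rel)
  have e2: "real (Suc k) * real (m choose Suc k) = (real m - real k) * real (m choose k)"
    by (rule choose_Suc_rel)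
  show ?case
  proof (cases "k \<le> m - a")
    case True
    have h1: "0 \<le> real (m-a) - real k" using True by simp
    have "real (Suc k) * real ((m-a) choose Suc k) \<le> (real (m-a) - real k) * ((1 - real a / real m)^k * real (m choose k))"
      unfolding e1 by (rule mult_left_mono[OF Suc h1])
    also have "\<dots> \<le> ((1 - real a / real m) * (real m - real k)) * ((1 - real a / real m)^k * real (m choose k))"
    proof (rule mult_right_mono)
      show "real (m - a) - real k \<le> (1 - real a / real m) * (real m - real k)"
        using assms True by (simp add: field_simps of_nat_diff)
      show "0 \<le> (1 - real a / real m) ^ k * real (m choose k)" using q0 by simp
    qed
    also have "\<dots> = (1 - real a / real m) ^ Suc k * ((real m - real k) * real (m choose k))"
      by (simp add: mult_ac)
    also have "\<dots> = real (Suc k) * ((1 - real a / real m) ^ Suc k * real (m choose Suc k))"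
      unfolding e2[symmetric] by (simp add: mult_ac)
    finally show ?thesis by (simp only: mult_le_cancel_left_pos of_nat_0_less_iff zero_less_Suc)
  next
    case False
    then have z: "real ((m-a) choose Suc k) = 0" by simp
    show ?thesis unfolding z by (intro mult_nonneg_nonneg zero_le_power q0 of_nat_0_le_iff)
  qed
qed

lemma prob_disjoint:
  assumes "A \<subseteq> {1..m}" "0 < m" "k \<le> m"
  shows "measure_pmf.prob (pmf_of_set {S. S \<subseteq> {1..m} \<and> card S = k}) {B. A \<inter> B = {}}
           \<le> exp (- real (card A) * real k / real m)"
proof -
  note True = assms(3)
  let ?U = "{S. S \<subseteq> {1..m} \<and> card S = k}"
  have finU: "finite ?U" by simp
  have cU: "card ?U = m choose k" using n_subsets[of "{1..m}" k] by simp
  have neU: "?U \<noteq> {}" using cU True by (metis card.empty zero_less_binomial_iff less_irrefl)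
  have finA: "finite A" using assms(1) finite_subset by blast
  have cA: "card A \<le> m" using card_mono[OF _ assms(1)] by simp
  have "?U \<inter> {B. A \<inter> B = {}} = {B. B \<subseteq> {1..m} - A \<and> card B = k}" by auto
  then have c2: "card (?U \<inter> {B. A \<inter> B = {}}) = (m - card A) choose k"
    using n_subsets[of "{1..m} - A" k] assms(1) finA by (simp add: card_Diff_subset)
  have "measure_pmf.prob (pmf_of_set ?U) {B. A \<inter> B = {}} = real ((m - card A) choose k) / real (m choose k)"
    using measure_pmf_of_set[OF neU finU] c2 cU by simp
  also have "\<dots> \<le> (1 - real (card A) / real m)^k"
    using choose_ratio[OF cA assms(2), of k] True
    by (simp add: divide_le_eq)
  also have "\<dots> \<le> (exp (- (real (card A) / real m)))^k"
    by (rule power_mono) (use exp_ge_add_one_self[of "- (real (card A) / real m)"] cA assms(2) in \<open>auto simp: field_simps\<close>)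
  also have "\<dots> = exp (- real (card A) * real k / real m)"
    by (simp add: exp_of_nat_mult[symmetric] algebra_simps)
  finally show ?thesis .
qed



lemma Pi_pmf_pair:
  assumes "finite A" "u \<in> A" "v \<in> A" "u \<noteq> v"
  shows "map_pmf (\<lambda>f. (f u, f v)) (Pi_pmf A d p) = pair_pmf (p u) (p v)"
proof -
  define A' where "A' = A - {u}"
  have AA: "A = insert u A'" "finite A'" "u \<notin> A'" "v \<in> A'" using assms by (auto simp: A'_def)
  have "Pi_pmf A d p = map_pmf (\<lambda>(y,f). f(u:=y)) (pair_pmf (p u) (Pi_pmf A' d p))"
    unfolding AA(1) by (rule Pi_pmf_insert[OF AA(2,3)])
  then have "map_pmf (\<lambda>f. (f u, f v)) (Pi_pmf A d p) = map_pmf (\<lambda>f. (f u, f v)) (map_pmf (\<lambda>(y,f). f(u:=y)) (pair_pmf (p u) (Pi_pmf A' d p)))"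
    by simp
  also have "\<dots> = map_pmf (apsnd (\<lambda>f. f v)) (pair_pmf (p u) (Pi_pmf A' d p))"
    using assms(4) by (simp add: pmf.map_comp o_def case_prod_unfold apsnd_def map_prod_def)
  also have "\<dots> = pair_pmf (p u) (map_pmf (\<lambda>f. f v) (Pi_pmf A' d p))"
    by (rule pair_map_pmf2[symmetric])
  also have "\<dots> = pair_pmf (p u) (p v)"
    using AA by (simp add: Pi_pmf_component)
  finally show ?thesis .
qed

lemma expectation_Pi_pair:
  fixes g :: "'b \<Rightarrow> 'b \<Rightarrow> real"
  assumes "finite A" "u \<in> A" "v \<in> A" "u \<noteq> v"
  shows "measure_pmf.expectation (Pi_pmf A d p) (\<lambda>f. g (f u) (f v))
       = measure_pmf.expectation (pair_pmf (p u) (p v)) (\<lambda>x. g (fst x) (snd x))"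
proof -
  have "measure_pmf.expectation (pair_pmf (p u) (p v)) (\<lambda>x. g (fst x) (snd x))
     = measure_pmf.expectation (map_pmf (\<lambda>f. (f u, f v)) (Pi_pmf A d p)) (\<lambda>x. g (fst x) (snd x))"
    by (simp only: Pi_pmf_pair[OF assms])
  also have "\<dots> = measure_pmf.expectation (Pi_pmf A d p) (\<lambda>f. g (f u) (f v))"
    by simp
  finally show ?thesis by simp
qed

lemma expectation_Pi_single:
  fixes g :: "'b \<Rightarrow> real"
  assumes "finite A" "u \<in> A"
  shows "measure_pmf.expectation (Pi_pmf A d p) (\<lambda>f. g (f u)) = measure_pmf.expectation (p u) g"
proof -
  have "measure_pmf.expectation (p u) g = measure_pmf.expectation (map_pmf (\<lambda>f. f u) (Pi_pmf A d p)) g"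
    using assms by (simp add: Pi_pmf_component)
  then show ?thesis by simp
qed

definition Usets :: "nat \<Rightarrow> nat \<Rightarrow> nat set set" where
  "Usets m k = {S. S \<subseteq> {1..m} \<and> card S = k}"

lemma Usets_fin: "finite (Usets m k)" unfolding Usets_def by simp
lemma Usets_ne: "k \<le> m \<Longrightarrow> Usets m k \<noteq> {}"
proof -
  assume "k \<le> m"
  then have "{1..k} \<in> Usets m k" unfolding Usets_def by auto
  then show ?thesis by auto
qed

lemma set_attr: "set_pmf P \<subseteq> {0..m} \<Longrightarrow> set_pmf (attr_pmf m P) \<subseteq> Pow {1..m}"
  unfolding attr_pmf_def using Usets_ne Usets_fin unfolding Usets_def
  by (auto simp: set_pmf_of_set subset_iff)

lemma fin_attr: "set_pmf P \<subseteq> {0..m} \<Longrightarrow> finite (set_pmf (attr_pmf m P))"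
  using set_attr by (meson finite_Pow_iff finite_atLeastAtMost finite_subset)

lemma expectation_attr:
  fixes h :: "nat set \<Rightarrow> real"
  assumes "set_pmf P \<subseteq> {0..m}"
  shows "measure_pmf.expectation (attr_pmf m P) h
     = (\<Sum>k\<in>{0..m}. pmf P k * measure_pmf.expectation (pmf_of_set (Usets m k)) h)"
  unfolding attr_pmf_def Usets_def[symmetric]
  by (subst pmf_expectation_bind[where A="{0..m}"])
     (use assms Usets_fin Usets_ne in \<open>auto simp: set_pmf_of_set\<close>)

lemma expectation_Usets_card:
  fixes h :: "nat \<Rightarrow> real"
  assumes "k \<le> m"
  shows "measure_pmf.expectation (pmf_of_set (Usets m k)) (\<lambda>S. h (card S) * g S)
       = h k * measure_pmf.expectation (pmf_of_set (Usets m k)) g"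
proof -
  have "measure_pmf.expectation (pmf_of_set (Usets m k)) (\<lambda>S. h (card S) * g S)
      = measure_pmf.expectation (pmf_of_set (Usets m k)) (\<lambda>S. h k * g S)"
    by (intro integral_cong_AE) (use Usets_fin Usets_ne[OF assms] in \<open>auto simp: AE_measure_pmf_iff Usets_def\<close>)
  then show ?thesis by simp
qed

lemma expectation_P_finite:
  fixes h :: "nat \<Rightarrow> real"
  assumes "set_pmf P \<subseteq> {0..m}"
  shows "measure_pmf.expectation P h = (\<Sum>k\<in>{0..m}. pmf P k * h k)"
  by (subst integral_measure_pmf_real[where A="{0..m}"]) (use assms in \<open>auto simp: mult.commute\<close>)

lemma prob_as_expectation:
  "measure_pmf.prob M E = measure_pmf.expectation M (\<lambda>x. if x \<in> E then 1 else 0)"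
proof -
  have "measure_pmf.expectation M (\<lambda>x. if x \<in> E then 1 else 0) = measure_pmf.expectation M (indicator E)"
    by (intro Bochner_Integration.integral_cong) (auto simp: indicator_def)
  also have "\<dots> = measure_pmf.prob M E" by simp
  finally show ?thesis by simp
qed

definition hh :: "real \<Rightarrow> nat set \<Rightarrow> real" where
  "hh \<theta> S = (if \<theta> < real (card S) then 1 else 0)"

definition dd :: "nat set \<Rightarrow> nat set \<Rightarrow> real" where
  "dd A B = (if A \<inter> B = {} then 1 else 0)"

lemma hh_01: "hh \<theta> S = 0 \<or> hh \<theta> S = 1" "0 \<le> hh \<theta> S" "hh \<theta> S \<le> 1" "hh \<theta> S * hh \<theta> S = hh \<theta> S"
  by (auto simp: hh_def[abs_def])

lemma dd_01: "0 \<le> dd A B" "dd A B \<le> 1" by (auto simp: dd_def[abs_def])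

lemma expectation_pair_iter:
  fixes F :: "'a \<times> 'b \<Rightarrow> real"
  assumes "finite (set_pmf p)" "finite (set_pmf q)"
  shows "measure_pmf.expectation (pair_pmf p q) F
       = measure_pmf.expectation p (\<lambda>a. measure_pmf.expectation q (\<lambda>b. F (a, b)))"
proof -
  have "measure_pmf.expectation (pair_pmf p q) F = (\<Sum>z\<in>set_pmf p \<times> set_pmf q. F z * pmf (pair_pmf p q) z)"
    by (rule integral_measure_pmf_real) (use assms in auto)
  also have "\<dots> = (\<Sum>z\<in>set_pmf p \<times> set_pmf q. F z * (pmf p (fst z) * pmf q (snd z)))"
    by (intro sum.cong refl) (auto simp: pmf_pair)
  also have "\<dots> = (\<Sum>a\<in>set_pmf p. \<Sum>b\<in>set_pmf q. F (a,b) * (pmf p a * pmf q b))"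
    by (subst sum.cartesian_product) (simp add: case_prod_beta)
  also have "\<dots> = (\<Sum>a\<in>set_pmf p. (\<Sum>b\<in>set_pmf q. F (a,b) * pmf q b) * pmf p a)"
    by (intro sum.cong refl) (simp add: sum_distrib_left sum_distrib_right mult_ac)
  also have "\<dots> = measure_pmf.expectation p (\<lambda>a. measure_pmf.expectation q (\<lambda>b. F (a, b)))"
  proof -
    have "\<And>a. measure_pmf.expectation q (\<lambda>b. F (a, b)) = (\<Sum>b\<in>set_pmf q. F (a,b) * pmf q b)"
      by (rule integral_measure_pmf_real) (use assms in auto)
    moreover have "measure_pmf.expectation p (\<lambda>a. measure_pmf.expectation q (\<lambda>b. F (a, b)))
        = (\<Sum>a\<in>set_pmf p. measure_pmf.expectation q (\<lambda>b. F (a, b)) * pmf p a)"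
      by (rule integral_measure_pmf_real) (use assms in auto)
    ultimately show ?thesis by simp
  qed
  finally show ?thesis .
qed

lemma expectation_hh:
  assumes "set_pmf P \<subseteq> {0..m}"
  shows "measure_pmf.expectation (attr_pmf m P) (hh \<theta>) = measure_pmf.prob P {k. \<theta> < real k}"
proof -
  have "measure_pmf.expectation (attr_pmf m P) (hh \<theta>)
      = (\<Sum>k\<in>{0..m}. pmf P k * measure_pmf.expectation (pmf_of_set (Usets m k)) (hh \<theta>))"
    by (rule expectation_attr[OF assms])
  also have "\<dots> = (\<Sum>k\<in>{0..m}. pmf P k * (if \<theta> < real k then 1 else 0))"
  proof (intro sum.cong refl)
    fix k assume k: "k \<in> {0..m}"
    have "measure_pmf.expectation (pmf_of_set (Usets m k)) (\<lambda>S. (\<lambda>c. if \<theta> < real c then 1 else 0) (card S) * 1)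
        = (if \<theta> < real k then 1 else 0) * measure_pmf.expectation (pmf_of_set (Usets m k)) (\<lambda>_. 1::real)"
      by (rule expectation_Usets_card) (use k in auto)
    then show "pmf P k * measure_pmf.expectation (pmf_of_set (Usets m k)) (hh \<theta>) = pmf P k * (if \<theta> < real k then 1 else 0)"
      by (simp add: hh_def[abs_def])
  qed
  also have "\<dots> = measure_pmf.expectation P (\<lambda>k. if \<theta> < real k then 1 else 0)"
    by (rule expectation_P_finite[OF assms, symmetric])
  also have "\<dots> = measure_pmf.prob P {k. \<theta> < real k}"
    by (simp add: prob_as_expectation)
  finally show ?thesis .
qed

lemma expectation_hd_bound:
  assumes "set_pmf P \<subseteq> {0..m}" "0 < m" "0 \<le> \<theta>" "a \<subseteq> {1..m}" "\<theta> < real (card a)"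
  shows "measure_pmf.expectation (attr_pmf m P) (\<lambda>b. hh \<theta> b * dd a b)
      \<le> measure_pmf.prob P {k. \<theta> < real k} * exp (- \<theta>\<^sup>2 / real m)"
proof -
  have "measure_pmf.expectation (attr_pmf m P) (\<lambda>b. hh \<theta> b * dd a b)
      = (\<Sum>k\<in>{0..m}. pmf P k * measure_pmf.expectation (pmf_of_set (Usets m k)) (\<lambda>b. hh \<theta> b * dd a b))"
    by (rule expectation_attr[OF assms(1)])
  also have "\<dots> \<le> (\<Sum>k\<in>{0..m}. pmf P k * ((if \<theta> < real k then 1 else 0) * exp (- \<theta>\<^sup>2 / real m)))"
  proof (intro sum_mono mult_left_mono pmf_nonneg)
    fix k assume k: "k \<in> {0..m}"
    have e: "measure_pmf.expectation (pmf_of_set (Usets m k)) (\<lambda>S. (\<lambda>c. if \<theta> < real c then 1 else 0) (card S) * dd a S)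
        = (if \<theta> < real k then 1 else 0) * measure_pmf.expectation (pmf_of_set (Usets m k)) (dd a)"
      by (rule expectation_Usets_card) (use k in auto)
    have "measure_pmf.expectation (pmf_of_set (Usets m k)) (dd a)
        = measure_pmf.prob (pmf_of_set (Usets m k)) {B. a \<inter> B = {}}"
      by (simp add: prob_as_expectation dd_def[abs_def])
    also have "\<dots> \<le> exp (- real (card a) * real k / real m)"
      unfolding Usets_def by (rule prob_disjoint) (use assms k in auto)
    finally have b1: "measure_pmf.expectation (pmf_of_set (Usets m k)) (dd a) \<le> exp (- real (card a) * real k / real m)" .
    show "measure_pmf.expectation (pmf_of_set (Usets m k)) (\<lambda>b. hh \<theta> b * dd a b)
        \<le> (if \<theta> < real k then 1 else 0) * exp (- \<theta>\<^sup>2 / real m)"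
    proof (cases "\<theta> < real k")
      case True
      have "\<theta>\<^sup>2 \<le> real (card a) * real k"
        unfolding power2_eq_square using True assms(3,5) by (intro mult_mono) auto
      then have ex: "exp (- real (card a) * real k / real m) \<le> exp (- \<theta>\<^sup>2 / real m)"
        using assms(2) by (simp add: divide_right_mono)
      have "measure_pmf.expectation (pmf_of_set (Usets m k)) (\<lambda>b. hh \<theta> b * dd a b)
          = measure_pmf.expectation (pmf_of_set (Usets m k)) (dd a)"
        using e True by (simp add: hh_def[abs_def])
      moreover have "(if \<theta> < real k then 1 else 0) * exp (- \<theta>\<^sup>2 / real m) = exp (- \<theta>\<^sup>2 / real m)"
        using True by simp
      ultimately show ?thesis using b1 ex by linarith
    next
      case False
      then show ?thesis using e by (simp add: hh_def[abs_def])
    qed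
  qed
  also have "\<dots> = (\<Sum>k\<in>{0..m}. pmf P k * (if \<theta> < real k then 1 else 0)) * exp (- \<theta>\<^sup>2 / real m)"
    by (subst sum_distrib_right) (simp add: mult_ac)
  also have "(\<Sum>k\<in>{0..m}. pmf P k * (if \<theta> < real k then 1 else 0)) = measure_pmf.prob P {k. \<theta> < real k}"
    using expectation_P_finite[OF assms(1), of "\<lambda>k. if \<theta> < real k then 1 else 0"]
    by (simp add: prob_as_expectation)
  finally show ?thesis .
qed

lemma expectation_pair_hhd:
  assumes "set_pmf P \<subseteq> {0..m}" "0 < m" "0 \<le> \<theta>"
  shows "measure_pmf.expectation (pair_pmf (attr_pmf m P) (attr_pmf m P))
           (\<lambda>x. hh \<theta> (fst x) * hh \<theta> (snd x) * dd (fst x) (snd x))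
      \<le> (measure_pmf.prob P {k. \<theta> < real k})^2 * exp (- \<theta>\<^sup>2 / real m)"
proof -
  let ?A = "attr_pmf m P"
  let ?q = "measure_pmf.prob P {k. \<theta> < real k}"
  let ?e = "exp (- \<theta>\<^sup>2 / real m)"
  have fin: "finite (set_pmf ?A)" by (rule fin_attr[OF assms(1)])
  have "measure_pmf.expectation (pair_pmf ?A ?A) (\<lambda>x. hh \<theta> (fst x) * hh \<theta> (snd x) * dd (fst x) (snd x))
      = measure_pmf.expectation ?A (\<lambda>a. measure_pmf.expectation ?A (\<lambda>b. hh \<theta> a * hh \<theta> b * dd a b))"
    by (subst expectation_pair_iter[OF fin fin]) simp
  also have "\<dots> \<le> measure_pmf.expectation ?A (\<lambda>a. hh \<theta> a * (?q * ?e))"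
  proof (rule integral_mono_AE)
    show "integrable (measure_pmf ?A) (\<lambda>a. measure_pmf.expectation ?A (\<lambda>b. hh \<theta> a * hh \<theta> b * dd a b))"
      by (rule integrable_measure_pmf_finite[OF fin])
    show "integrable (measure_pmf ?A) (\<lambda>a. hh \<theta> a * (?q * ?e))"
      by (rule integrable_measure_pmf_finite[OF fin])
    show "AE a in measure_pmf ?A. measure_pmf.expectation ?A (\<lambda>b. hh \<theta> a * hh \<theta> b * dd a b) \<le> hh \<theta> a * (?q * ?e)"
    proof (rule AE_pmfI)
      fix a assume a: "a \<in> set_pmf ?A"
      have aa: "a \<subseteq> {1..m}" using set_attr[OF assms(1)] a by auto
      show "measure_pmf.expectation ?A (\<lambda>b. hh \<theta> a * hh \<theta> b * dd a b) \<le> hh \<theta> a * (?q * ?e)"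
      proof (cases "\<theta> < real (card a)")
        case True
        then have "measure_pmf.expectation ?A (\<lambda>b. hh \<theta> a * hh \<theta> b * dd a b) = measure_pmf.expectation ?A (\<lambda>b. hh \<theta> b * dd a b)"
          by (simp add: hh_def[abs_def])
        also have "\<dots> \<le> ?q * ?e" by (rule expectation_hd_bound[OF assms aa True])
        finally show ?thesis using True by (simp add: hh_def[abs_def])
      next
        case False
        then show ?thesis by (simp add: hh_def[abs_def])
      qed
    qed
  qed
  also have "\<dots> = measure_pmf.expectation ?A (hh \<theta>) * (?q * ?e)"
    by simp
  also have "\<dots> = ?q^2 * ?e"
    by (simp add: expectation_hh[OF assms(1)] power2_eq_square)
  finally show ?thesis .
qed

lemma expectation_pair_hh:
  assumes "set_pmf P \<subseteq> {0..m}"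
  shows "measure_pmf.expectation (pair_pmf (attr_pmf m P) (attr_pmf m P))
           (\<lambda>x. hh \<theta> (fst x) * hh \<theta> (snd x))
      = (measure_pmf.prob P {k. \<theta> < real k})^2"
proof -
  let ?A = "attr_pmf m P"
  have fin: "finite (set_pmf ?A)" by (rule fin_attr[OF assms(1)])
  have "measure_pmf.expectation (pair_pmf ?A ?A) (\<lambda>x. hh \<theta> (fst x) * hh \<theta> (snd x))
      = measure_pmf.expectation ?A (\<lambda>a. measure_pmf.expectation ?A (\<lambda>b. hh \<theta> a * hh \<theta> b))"
    by (subst expectation_pair_iter[OF fin fin]) simp
  also have "\<dots> = measure_pmf.expectation ?A (\<lambda>a. hh \<theta> a * measure_pmf.expectation ?A (hh \<theta>))"
    by simp
  also have "\<dots> = (measure_pmf.expectation ?A (hh \<theta>))^2"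
    by (simp add: power2_eq_square)
  finally show ?thesis by (simp add: expectation_hh[OF assms])
qed

lemma fin_RIG:
  fixes n :: nat
  assumes "set_pmf P \<subseteq> {0..m}"
  shows "finite (set_pmf (Pi_pmf {1..n} {} (\<lambda>_. attr_pmf m P)))"
proof -
  have "finite (PiE_dflt {1..n} {} (set_pmf \<circ> (\<lambda>_. attr_pmf m P)))"
    by (rule finite_PiE_dflt) (simp_all add: fin_attr[OF assms])
  then show ?thesis by (simp add: set_Pi_pmf)
qed

lemma expectation_double_sum:
  fixes f :: "'i \<Rightarrow> 'j \<Rightarrow> 'a \<Rightarrow> real"
  assumes "finite (set_pmf M)"
  shows "measure_pmf.expectation M (\<lambda>x. \<Sum>i\<in>A. \<Sum>j\<in>B. f i j x)
       = (\<Sum>i\<in>A. \<Sum>j\<in>B. measure_pmf.expectation M (f i j))"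
proof -
  have e: "\<And>g. measure_pmf.expectation M g = (\<Sum>x\<in>set_pmf M. g x * pmf M x)"
    by (rule integral_measure_pmf_real) (use assms in auto)
  have "measure_pmf.expectation M (\<lambda>x. \<Sum>i\<in>A. \<Sum>j\<in>B. f i j x)
      = (\<Sum>x\<in>set_pmf M. \<Sum>i\<in>A. \<Sum>j\<in>B. f i j x * pmf M x)"
    by (simp add: e sum_distrib_right)
  also have "\<dots> = (\<Sum>i\<in>A. \<Sum>x\<in>set_pmf M. \<Sum>j\<in>B. f i j x * pmf M x)"
    by (rule sum.swap)
  also have "\<dots> = (\<Sum>i\<in>A. \<Sum>j\<in>B. \<Sum>x\<in>set_pmf M. f i j x * pmf M x)"
    by (intro sum.cong refl) (rule sum.swap)
  also have "\<dots> = (\<Sum>i\<in>A. \<Sum>j\<in>B. measure_pmf.expectation M (f i j))"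
    by (simp add: e)
  finally show ?thesis .
qed

definition Vset :: "real \<Rightarrow> nat \<Rightarrow> (nat \<Rightarrow> nat set) \<Rightarrow> nat set" where
  "Vset \<theta> n S = {v \<in> {1..n}. \<theta> < real (card (S v))}"

definition bad :: "(nat \<Rightarrow> nat set) \<Rightarrow> nat set \<Rightarrow> (nat \<times> nat) set" where
  "bad S V = {(u,v). u \<in> V \<and> v \<in> V \<and> u < v \<and> S u \<inter> S v = {}}"

lemma sum_ind_real: "finite A \<Longrightarrow> (\<Sum>x\<in>A. indicator B x :: real) = real (card (A \<inter> B))"
  by (simp add: indicator_def sum.If_cases Int_def)

lemma card_Vset: "real (card (Vset \<theta> n S)) = (\<Sum>v\<in>{1..n}. hh \<theta> (S v))"
proof -
  have "(\<Sum>v\<in>{1..n}. hh \<theta> (S v)) = (\<Sum>v\<in>{1..n}. indicator (Vset \<theta> n S) v)"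
    by (intro sum.cong refl) (auto simp: hh_def Vset_def indicator_def)
  also have "\<dots> = real (card ({1..n} \<inter> Vset \<theta> n S))"
    by (rule sum_ind_real) simp
  also have "{1..n} \<inter> Vset \<theta> n S = Vset \<theta> n S" by (auto simp: Vset_def)
  finally show ?thesis by simp
qed

lemma card_bad: "real (card (bad S (Vset \<theta> n S))) =
   (\<Sum>u\<in>{1..n}. \<Sum>v\<in>{1..n}. if u < v then hh \<theta> (S u) * hh \<theta> (S v) * dd (S u) (S v) else 0)"
proof -
  have "(\<Sum>u\<in>{1..n}. \<Sum>v\<in>{1..n}. if u < v then hh \<theta> (S u) * hh \<theta> (S v) * dd (S u) (S v) else 0)
      = (\<Sum>u\<in>{1..n}. \<Sum>v\<in>{1..n}. indicator (bad S (Vset \<theta> n S)) (u,v))"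
    by (intro sum.cong refl) (auto simp: hh_def dd_def bad_def Vset_def indicator_def)
  also have "\<dots> = (\<Sum>z\<in>{1..n}\<times>{1..n}. indicator (bad S (Vset \<theta> n S)) z)"
    by (subst sum.cartesian_product) (simp add: case_prod_beta)
  also have "\<dots> = real (card (({1..n}\<times>{1..n}) \<inter> bad S (Vset \<theta> n S)))"
    by (rule sum_ind_real) simp
  also have "({1..n}\<times>{1..n}) \<inter> bad S (Vset \<theta> n S) = bad S (Vset \<theta> n S)"
    by (auto simp: Vset_def bad_def)
  finally show ?thesis by simp
qed

lemma clique_bounds:
  assumes "finite V"
  shows "real (card V) - real (card (bad S V)) \<le> real (clique_number S V)"
    and "clique_number S V \<le> card V"
proof -
  let ?Cs = "{card C | C. C \<subseteq> V \<and> is_clique S C}"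
  have finCs: "finite ?Cs"
  proof -
    have "?Cs \<subseteq> card ` Pow V" by auto
    then show ?thesis using assms by (meson finite_Pow_iff finite_imageI finite_subset)
  qed
  have "0 \<in> ?Cs" by (auto simp: is_clique_def intro!: exI[of _ "{}"])
  then have neCs: "?Cs \<noteq> {}" by auto
  show "clique_number S V \<le> card V"
    unfolding clique_number_def using assms
    by (subst Max_le_iff[OF finCs neCs]) (auto intro: card_mono)
  define C where "C = {v \<in> V. \<forall>u\<in>V. u < v \<longrightarrow> S u \<inter> S v \<noteq> {}}"
  have cl: "is_clique S C"
    unfolding is_clique_def adj_def
  proof (intro ballI impI conjI)
    fix u v assume uv: "u \<in> C" "v \<in> C" "u \<noteq> v"
    then show "u \<noteq> v" by simp
    show "S u \<inter> S v \<noteq> {}"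
    proof (cases "u < v")
      case True then show ?thesis using uv by (auto simp: C_def)
    next
      case False then have "v < u" using uv by simp
      then have "S v \<inter> S u \<noteq> {}" using uv by (auto simp: C_def)
      then show ?thesis by (simp add: Int_commute)
    qed
  qed
  have "card C \<in> ?Cs" using cl by (auto simp: C_def)
  then have c1: "card C \<le> clique_number S V"
    unfolding clique_number_def using finCs by simp
  have "V - C \<subseteq> snd ` bad S V"
  proof
    fix v assume v: "v \<in> V - C"
    then obtain u where "u \<in> V" "u < v" "S u \<inter> S v = {}" by (auto simp: C_def)
    then have "(u,v) \<in> bad S V" using v by (auto simp: bad_def)
    then show "v \<in> snd ` bad S V" by force
  qed
  moreover have "finite (bad S V)"
  proof -
    have "bad S V \<subseteq> V \<times> V" by (auto simp: bad_def)
    then show ?thesis using assms finite_subset by blast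
  qed
  ultimately have "card (V - C) \<le> card (bad S V)"
    by (meson card_image_le card_mono finite_imageI le_trans)
  moreover have "card V \<le> card C + card (V - C)"
  proof -
    have "V = C \<union> (V - C)" by (auto simp: C_def)
    then show ?thesis by (metis card_Un_le)
  qed
  ultimately show "real (card V) - real (card (bad S V)) \<le> real (clique_number S V)"
    using c1 by linarith
qed

lemma expectation_X:
  assumes "set_pmf P \<subseteq> {0..m}"
  shows "measure_pmf.expectation (Pi_pmf {1..n} {} (\<lambda>_. attr_pmf m P)) (\<lambda>S. real (card (Vset \<theta> n S)))
     = real n * measure_pmf.prob P {k. \<theta> < real k}"
proof -
  have "measure_pmf.expectation (Pi_pmf {1..n} {} (\<lambda>_. attr_pmf m P)) (\<lambda>S. \<Sum>v\<in>{1..n}. hh \<theta> (S v))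
      = (\<Sum>v\<in>{1..n}. measure_pmf.expectation (attr_pmf m P) (hh \<theta>))"
    by (rule expectation_sum_Pi_pmf) (auto intro: integrable_measure_pmf_finite fin_attr[OF assms])
  then show ?thesis by (simp add: card_Vset expectation_hh[OF assms])
qed

lemma expectation_X2:
  fixes \<theta> :: real
  assumes "set_pmf P \<subseteq> {0..m}"
  defines "q \<equiv> measure_pmf.prob P {k. \<theta> < real k}"
  shows "measure_pmf.expectation (Pi_pmf {1..n} {} (\<lambda>_. attr_pmf m P)) (\<lambda>S. (real (card (Vset \<theta> n S)))\<^sup>2)
     \<le> real n * q + (real n * q)\<^sup>2"
proof -
  let ?R = "Pi_pmf {1..n} {} (\<lambda>_. attr_pmf m P)"
  have fR: "finite (set_pmf ?R)" by (rule fin_RIG[OF assms(1)])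
  have "measure_pmf.expectation ?R (\<lambda>S. (real (card (Vset \<theta> n S)))\<^sup>2)
      = measure_pmf.expectation ?R (\<lambda>S. \<Sum>u\<in>{1..n}. \<Sum>v\<in>{1..n}. hh \<theta> (S u) * hh \<theta> (S v))"
    by (simp add: card_Vset power2_eq_square sum_product)
  also have "\<dots> = (\<Sum>u\<in>{1..n}. \<Sum>v\<in>{1..n}. measure_pmf.expectation ?R (\<lambda>S. hh \<theta> (S u) * hh \<theta> (S v)))"
    by (rule expectation_double_sum[OF fR])
  also have "\<dots> \<le> (\<Sum>u\<in>{1..n}. \<Sum>v\<in>{1..n}. (if u = v then q else 0) + q\<^sup>2)"
  proof (intro sum_mono)
    fix u v assume uv: "u \<in> {1..n}" "v \<in> {1..n}"
    show "measure_pmf.expectation ?R (\<lambda>S. hh \<theta> (S u) * hh \<theta> (S v)) \<le> (if u = v then q else 0) + q\<^sup>2"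
    proof (cases "u = v")
      case True
      have "measure_pmf.expectation ?R (\<lambda>S. hh \<theta> (S u) * hh \<theta> (S v)) = measure_pmf.expectation ?R (\<lambda>S. hh \<theta> (S u))"
        using True by (simp add: hh_01(4))
      also have "\<dots> = measure_pmf.expectation (attr_pmf m P) (hh \<theta>)"
        by (rule expectation_Pi_single) (use uv in auto)
      also have "\<dots> = q" unfolding q_def by (rule expectation_hh[OF assms(1)])
      finally show ?thesis using True by simp
    next
      case False
      have "measure_pmf.expectation ?R (\<lambda>S. hh \<theta> (S u) * hh \<theta> (S v))
          = measure_pmf.expectation (pair_pmf (attr_pmf m P) (attr_pmf m P)) (\<lambda>x. hh \<theta> (fst x) * hh \<theta> (snd x))"
        by (rule expectation_Pi_pair[where g="\<lambda>a b. hh \<theta> a * hh \<theta> b"]) (use uv False in auto)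
      also have "\<dots> = q\<^sup>2" unfolding q_def by (rule expectation_pair_hh[OF assms(1)])
      finally show ?thesis using False by simp
    qed
  qed
  also have "\<dots> = real n * q + (real n * q)\<^sup>2"
    by (simp add: sum.distrib power2_eq_square algebra_simps)
  finally show ?thesis .
qed

lemma expectation_N:
  fixes \<theta> :: real
  assumes "set_pmf P \<subseteq> {0..m}" "0 < m" "0 \<le> \<theta>"
  defines "q \<equiv> measure_pmf.prob P {k. \<theta> < real k}"
  shows "measure_pmf.expectation (Pi_pmf {1..n} {} (\<lambda>_. attr_pmf m P)) (\<lambda>S. real (card (bad S (Vset \<theta> n S))))
     \<le> (real n)\<^sup>2 * q\<^sup>2 * exp (- \<theta>\<^sup>2 / real m)"
proof -
  let ?R = "Pi_pmf {1..n} {} (\<lambda>_. attr_pmf m P)"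
  let ?e = "exp (- \<theta>\<^sup>2 / real m)"
  have fR: "finite (set_pmf ?R)" by (rule fin_RIG[OF assms(1)])
  have "measure_pmf.expectation ?R (\<lambda>S. real (card (bad S (Vset \<theta> n S))))
      = (\<Sum>u\<in>{1..n}. \<Sum>v\<in>{1..n}. measure_pmf.expectation ?R
          (\<lambda>S. if u < v then hh \<theta> (S u) * hh \<theta> (S v) * dd (S u) (S v) else 0))"
    unfolding card_bad by (rule expectation_double_sum[OF fR])
  also have "\<dots> \<le> (\<Sum>u\<in>{1..n}. \<Sum>v\<in>{1..n}. q\<^sup>2 * ?e)"
  proof (intro sum_mono)
    fix u v assume uv: "u \<in> {1..n}" "v \<in> {1..n}"
    show "measure_pmf.expectation ?R (\<lambda>S. if u < v then hh \<theta> (S u) * hh \<theta> (S v) * dd (S u) (S v) else 0) \<le> q\<^sup>2 * ?e"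
    proof (cases "u < v")
      case True
      have "measure_pmf.expectation ?R (\<lambda>S. if u < v then hh \<theta> (S u) * hh \<theta> (S v) * dd (S u) (S v) else 0)
          = measure_pmf.expectation ?R (\<lambda>S. hh \<theta> (S u) * hh \<theta> (S v) * dd (S u) (S v))"
        using True by simp
      also have "\<dots> = measure_pmf.expectation (pair_pmf (attr_pmf m P) (attr_pmf m P))
           (\<lambda>x. hh \<theta> (fst x) * hh \<theta> (snd x) * dd (fst x) (snd x))"
        by (rule expectation_Pi_pair[where g="\<lambda>a b. hh \<theta> a * hh \<theta> b * dd a b"]) (use uv True in auto)
      also have "\<dots> \<le> q\<^sup>2 * ?e" unfolding q_def by (rule expectation_pair_hhd[OF assms(1-3)])
      finally show ?thesis .
    next
      case False
      then show ?thesis by simp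
    qed
  qed
  also have "\<dots> = (real n)\<^sup>2 * q\<^sup>2 * ?e"
    by (simp add: power2_eq_square)
  finally show ?thesis .
qed

lemma unif_seq:
  assumes ne: "\<And>n. R n \<noteq> {}"
    and H: "\<And>x. (\<And>n. x n \<in> R n) \<Longrightarrow> eventually (\<lambda>n. Q n (x n)) sequentially"
  shows "eventually (\<lambda>n. \<forall>z\<in>R n. Q n z) sequentially"
proof (rule ccontr)
  assume "\<not> ?thesis"
  then have fr: "frequently (\<lambda>n. \<exists>z\<in>R n. \<not> Q n z) sequentially"
    by (simp add: not_eventually)
  define x where "x n = (if \<exists>z\<in>R n. \<not> Q n z then SOME z. z \<in> R n \<and> \<not> Q n z else SOME z. z \<in> R n)" for n
  have xR: "x n \<in> R n" for n
  proof (cases "\<exists>z\<in>R n. \<not> Q n z")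
    case True
    then have "\<exists>z. z \<in> R n \<and> \<not> Q n z" by blast
    from someI_ex[OF this] True show ?thesis by (simp add: x_def)
  next
    case False
    have "\<exists>z. z \<in> R n" using ne[of n] by blast
    from someI_ex[OF this] False show ?thesis by (simp add: x_def)
  qed
  have ev: "eventually (\<lambda>n. Q n (x n)) sequentially" by (rule H) (rule xR)
  have "frequently (\<lambda>n. \<not> Q n (x n)) sequentially"
  proof (rule frequently_elim1[OF fr])
    fix n assume a: "\<exists>z\<in>R n. \<not> Q n z"
    then have "\<exists>z. z \<in> R n \<and> \<not> Q n z" by blast
    from someI_ex[OF this] a show "\<not> Q n (x n)" by (simp add: x_def)
  qed
  with ev show False by (simp add: frequently_def)
qed

lemma PL_unif:
  fixes F :: "nat \<Rightarrow> real \<Rightarrow> real" and G :: "real \<Rightarrow> real"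
  assumes PL: "\<And>x. (\<And>n. a n \<le> x n \<and> x n \<le> b n) \<Longrightarrow> (\<lambda>n. F n (x n)) \<sim>[sequentially] (\<lambda>n. G (x n))"
    and ab: "\<And>n. a n \<le> b n"
    and c: "c > 0"
  shows "eventually (\<lambda>n. \<forall>z\<in>{a n..b n}. \<bar>F n z - G z\<bar> \<le> c * \<bar>G z\<bar>) sequentially"
proof (rule unif_seq)
  show "\<And>n. {a n..b n} \<noteq> {}" using ab by simp
  fix x :: "nat \<Rightarrow> real" assume "\<And>n. x n \<in> {a n..b n}"
  then have "(\<lambda>n. F n (x n)) \<sim>[sequentially] (\<lambda>n. G (x n))" by (intro PL) auto
  then have "(\<lambda>n. F n (x n) - G (x n)) \<in> o[sequentially](\<lambda>n. G (x n))"
    by (rule asymp_equiv_imp_diff_smallo)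
  from landau_o.smallD[OF this c]
  show "eventually (\<lambda>n. \<bar>F n (x n) - G (x n)\<bar> \<le> c * \<bar>G (x n)\<bar>) sequentially" by simp
qed



lemma ex_pow2_ivl:
  fixes x :: real
  assumes "1 \<le> x"
  shows "\<exists>k::nat. 2^k \<le> x \<and> x < 2^(Suc k)"
proof -
  obtain N :: nat where N: "x < 2^N" using real_arch_pow[of 2 x] by auto
  have "\<forall>x::real. 1 \<le> x \<and> x < 2^N \<longrightarrow> (\<exists>k::nat. 2^k \<le> x \<and> x < 2^(Suc k))"
  proof (induction N)
    case 0 then show ?case by auto
  next
    case (Suc N)
    show ?case
    proof (intro allI impI)
      fix x :: real assume x: "1 \<le> x \<and> x < 2 ^ Suc N"
      show "\<exists>k::nat. 2^k \<le> x \<and> x < 2^(Suc k)"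
      proof (cases "x < 2^N")
        case True then show ?thesis using Suc x by blast
      next
        case False then show ?thesis using x by (intro exI[of _ N]) auto
      qed
    qed
  qed
  then show ?thesis using assms N by blast
qed

lemma eventually_powr_ge:
  fixes C d :: real
  assumes "0 < d"
  shows "eventually (\<lambda>w. C \<le> w powr d) at_top"
proof -
  have "eventually (\<lambda>w. max 1 (\<bar>C\<bar> powr (1/d)) \<le> w) at_top" by (rule eventually_ge_at_top)
  then show ?thesis
  proof (rule eventually_mono)
    fix w assume w: "max 1 (\<bar>C\<bar> powr (1/d)) \<le> w"
    have "C \<le> \<bar>C\<bar>" by simp
    also have "\<bar>C\<bar> \<le> (\<bar>C\<bar> powr (1/d)) powr d"
      using assms by (cases "C = 0") (simp_all add: powr_powr)
    also have "\<dots> \<le> w powr d"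
      using w assms by (intro powr_mono2) auto
    finally show "C \<le> w powr d" .
  qed
qed

lemma potter:
  fixes L :: "real \<Rightarrow> real"
  assumes sv: "((\<lambda>x. L (2*x) / L x) \<longlongrightarrow> 1) at_top"
    and H: "\<And>Z. \<exists>z0\<ge>Z. \<exists>b B. 0 < b \<and> (\<forall>z. z0 \<le> z \<and> z \<le> 2*z0 \<longrightarrow> b \<le> L z \<and> L z \<le> B)"
    and \<delta>: "0 < \<delta>"
  shows "eventually (\<lambda>z. z powr (-\<delta>) \<le> L z \<and> L z \<le> z powr \<delta>) at_top"
proof -
  define d where "d = \<delta>/2"
  have d: "0 < d" using \<delta> by (simp add: d_def)
  define r where "r = 2 powr d"
  have r1: "1 < r" using d by (simp add: r_def)
  define e where "e = min (1 - 1/r) (r - 1)"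
  have e1: "e \<le> 1 - 1/r" by (simp add: e_def)
  have rinv: "0 < 1/r" using r1 by simp
  have e0: "0 < e" using r1 by (auto simp: e_def field_simps)
  have e: "0 < e" "e < 1" using e0 e1 rinv by linarith+
  have "eventually (\<lambda>x. dist (L (2*x) / L x) 1 < e) at_top"
    using sv e(1) by (rule tendstoD)
  then obtain Z1 where Z1: "\<And>x. x \<ge> Z1 \<Longrightarrow> \<bar>L (2*x) / L x - 1\<bar> < e"
    by (auto simp: eventually_at_top_linorder dist_real_def)
  obtain z0 b B where z0: "z0 \<ge> max Z1 1" and b: "0 < b"
    and bB: "\<And>z. z0 \<le> z \<Longrightarrow> z \<le> 2*z0 \<Longrightarrow> b \<le> L z \<and> L z \<le> B"
    using H[of "max Z1 1"] by blast
  have step: "L (2*w) \<le> r * L w \<and> L w / r \<le> L (2*w)" if w: "w \<ge> z0" "L w > 0" for w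
  proof -
    have "\<bar>L (2*w) / L w - 1\<bar> < e" using Z1 w z0 by auto
    then have "L (2*w) / L w < r" "1/r < L (2*w) / L w" by (auto simp: e_def)
    then show ?thesis using w(2) r1 by (auto simp: field_simps)
  qed
  have ind: "b / r^k \<le> L (2^k * z) \<and> L (2^k * z) \<le> B * r^k" if z: "z0 \<le> z" "z \<le> 2*z0" for k :: nat and z
  proof (induction k)
    case 0 then show ?case using bB[OF z] by simp
  next
    case (Suc k)
    have w: "2^k * z \<ge> z0" using z z0 by (smt (verit) mult_le_cancel_right1 one_le_power)
    have pos: "L (2^k * z) > 0" using Suc b r1 by (smt (verit) divide_pos_pos zero_less_power)
    have eq: "2^Suc k * z = 2 * (2^k * z)" by simp
    have "L (2^Suc k * z) \<le> r * L (2^k * z)" "L (2^k * z) / r \<le> L (2^Suc k * z)"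
      using step[OF w pos] unfolding eq by auto
    moreover have "r * L (2^k * z) \<le> B * r^Suc k" using Suc r1 by (simp add: mult_ac)
    moreover have "b / r^Suc k \<le> L (2^k * z) / r" using Suc r1 by (simp add: divide_right_mono field_simps)
    ultimately show ?case by linarith
  qed
  have main: "b * z0 powr d * w powr (-d) \<le> L w \<and> L w \<le> B * z0 powr (-d) * w powr d" if w: "w \<ge> z0" for w
  proof -
    have z0p: "z0 > 0" using z0 by simp
    obtain k :: nat where k: "2^k \<le> w/z0" "w/z0 < 2^Suc k"
      using ex_pow2_ivl[of "w/z0"] w z0p by auto
    define z where "z = w / 2^k"
    have z: "z0 \<le> z" "z \<le> 2*z0" using k z0p by (auto simp: z_def field_simps)
    have wz: "w = 2^k * z" by (simp add: z_def)
    have rk: "r^k = (2^k) powr d" by (simp add: r_def powr_realpow[symmetric] powr_powr mult.commute)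
    have rk2: "r^k \<le> (w/z0) powr d" unfolding rk using k d by (intro powr_mono2) auto
    have rkpos: "0 < r^k" using r1 by simp
    have wz0: "(w/z0) powr d = w powr d * z0 powr (-d)" using w z0p by (simp add: powr_divide powr_minus field_simps)
    have "L w \<le> B * r^k" using ind[OF z, of k] wz by simp
    also have "\<dots> \<le> B * ((w/z0) powr d)"
      using rk2 bB[of z0] z0p b by (intro mult_left_mono) (auto intro: order.trans)
    finally have up: "L w \<le> B * z0 powr (-d) * w powr d" unfolding wz0 by (simp add: mult_ac)
    have "b * z0 powr d * w powr (-d) = b / ((w/z0) powr d)"
      using w z0p by (simp add: powr_divide powr_minus field_simps)
    also have "\<dots> \<le> b / r^k"
    proof -
      have "0 < (w/z0) powr d" using rk2 rkpos by linarith
      then show ?thesis using rk2 rkpos b by (intro divide_left_mono) auto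
    qed
    also have "\<dots> \<le> L w" using ind[OF z, of k] wz by simp
    finally show ?thesis using up by simp
  qed
  have ev1: "eventually (\<lambda>w. B * z0 powr (-d) \<le> w powr d) at_top" by (rule eventually_powr_ge[OF d])
  have ev2: "eventually (\<lambda>w. 1 / (b * z0 powr d) \<le> w powr d) at_top" by (rule eventually_powr_ge[OF d])
  have ev3: "eventually (\<lambda>w. max z0 1 \<le> w) at_top" by (rule eventually_ge_at_top)
  show ?thesis
  proof (rule eventually_mono[OF eventually_conj[OF ev1 eventually_conj[OF ev2 ev3]]])
    fix w assume a: "B * z0 powr (-d) \<le> w powr d \<and> 1 / (b * z0 powr d) \<le> w powr d \<and> max z0 1 \<le> w"
    have wpos: "w > 0" using a by auto
    have z0p: "z0 > 0" using z0 by simp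
    have m: "b * z0 powr d * w powr (-d) \<le> L w \<and> L w \<le> B * z0 powr (-d) * w powr d" using main a by auto
    have dd: "w powr \<delta> = w powr d * w powr d" "w powr (-\<delta>) = w powr (-d) * w powr (-d)"
      by (simp_all add: d_def powr_add[symmetric])
    have "L w \<le> B * z0 powr (-d) * w powr d" using m by simp
    also have "\<dots> \<le> w powr d * w powr d" using a wpos by (intro mult_right_mono) auto
    finally have u: "L w \<le> w powr \<delta>" using dd by simp
    have bz: "0 < b * z0 powr d" using b z0p by simp
    have "w powr (-d) \<le> b * z0 powr d * w powr d * w powr (-d)"
    proof -
      have "1 \<le> b * z0 powr d * w powr d" using a bz by (simp add: field_simps)
      then show ?thesis using wpos by (simp add: mult_left_le)
    qed
    also have "\<dots> = b * z0 powr d" using wpos by (simp add: powr_minus field_simps)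
    finally have "w powr (-d) * w powr (-d) \<le> b * z0 powr d * w powr (-d)"
      using wpos by (intro mult_right_mono) auto
    then have l: "w powr (-\<delta>) \<le> L w" using dd m by linarith
    show "w powr (-\<delta>) \<le> L w \<and> L w \<le> w powr \<delta>" using u l by simp
  qed
qed

locale rigc =
  fixes \<alpha> \<epsilon>0 :: real and L :: "real \<Rightarrow> real" and m :: "nat \<Rightarrow> nat" and P :: "nat \<Rightarrow> nat pmf"
  assumes alpha: "1 < \<alpha>" "\<alpha> < 2"
    and eps0: "0 < \<epsilon>0" "\<epsilon>0 < 1/2"
    and m_pos: "\<And>n. m n \<ge> 1"
    and P_supp: "\<And>n. set_pmf (P n) \<subseteq> {0..m n}"
    and L_sv: "slowly_varying L"
    and condPL: "\<And>x :: nat \<Rightarrow> real.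
        (\<And>n. real n powr (1/2 - \<epsilon>0) \<le> x n \<and> x n \<le> real n powr (1/2 + \<epsilon>0)) \<Longrightarrow>
        (\<lambda>n. measure_pmf.prob (P n) {k. sqrt (real n / real (m n)) * real k \<ge> x n})
          \<sim>[sequentially] (\<lambda>n. L (x n) * x n powr (- \<alpha>))"
begin

definition FF :: "nat \<Rightarrow> real \<Rightarrow> real" where
  "FF n z = measure_pmf.prob (P n) {k. z \<le> sqrt (real n / real (m n)) * real k}"

definition GG :: "real \<Rightarrow> real" where
  "GG z = L z * z powr (-\<alpha>)"

lemma FF_anti: "z \<le> z' \<Longrightarrow> FF n z' \<le> FF n z"
  unfolding FF_def by (intro measure_pmf.finite_measure_mono) auto

lemma FF_01: "0 \<le> FF n z" "FF n z \<le> 1"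
  unfolding FF_def by auto

lemma range_le: "real n powr (1/2 - \<epsilon>0) \<le> real n powr (1/2 + \<epsilon>0)"
proof (cases "n = 0")
  case True then show ?thesis by simp
next
  case False then show ?thesis using eps0 by (intro powr_mono) auto
qed

lemma U: "eventually (\<lambda>n. \<forall>z\<in>{real n powr (1/2 - \<epsilon>0)..real n powr (1/2 + \<epsilon>0)}.
            \<bar>FF n z - GG z\<bar> \<le> 1/2 * \<bar>GG z\<bar>) sequentially"
  unfolding FF_def GG_def
  by (rule PL_unif[where F="\<lambda>n z. measure_pmf.prob (P n) {k. z \<le> sqrt (real n / real (m n)) * real k}"])
     (use condPL range_le in auto)

lemma U2: "eventually (\<lambda>n. \<forall>z\<in>{real n powr (1/2 - \<epsilon>0)..real n powr (1/2 + \<epsilon>0)}.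
            0 \<le> GG z \<and> GG z \<le> 2 * FF n z \<and> FF n z \<le> 2 * GG z) sequentially"
  using U
proof (rule eventually_mono)
  fix n assume a: "\<forall>z\<in>{real n powr (1/2 - \<epsilon>0)..real n powr (1/2 + \<epsilon>0)}. \<bar>FF n z - GG z\<bar> \<le> 1/2 * \<bar>GG z\<bar>"
  show "\<forall>z\<in>{real n powr (1/2 - \<epsilon>0)..real n powr (1/2 + \<epsilon>0)}. 0 \<le> GG z \<and> GG z \<le> 2 * FF n z \<and> FF n z \<le> 2 * GG z"
  proof
    fix z assume z: "z \<in> {real n powr (1/2 - \<epsilon>0)..real n powr (1/2 + \<epsilon>0)}"
    have b: "\<bar>FF n z - GG z\<bar> \<le> 1/2 * \<bar>GG z\<bar>" using a z by blast
    have f0: "0 \<le> FF n z" by (rule FF_01)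
    have g0: "0 \<le> GG z"
    proof (rule ccontr)
      assume "\<not> 0 \<le> GG z"
      then have "GG z < 0" by simp
      then show False using b f0 by (simp add: abs_if split: if_splits)
    qed
    then show "0 \<le> GG z \<and> GG z \<le> 2 * FF n z \<and> FF n z \<le> 2 * GG z" using b f0 by (simp add: abs_if split: if_splits)
  qed
qed

lemma sv_t: "0 < t \<Longrightarrow> ((\<lambda>x. L (t * x) / L x) \<longlongrightarrow> 1) at_top"
  using L_sv unfolding slowly_varying_def by blast

lemma Lnz: "eventually (\<lambda>z. L z \<noteq> 0) at_top"
proof -
  have "eventually (\<lambda>x. dist (L (1 * x) / L x) 1 < 1/2) at_top"
    using sv_t[of 1] by (rule tendstoD) simp_all
  then show ?thesis by (rule eventually_mono) (auto simp: dist_real_def)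
qed

lemma H: "\<exists>z0\<ge>Z. \<exists>b B. 0 < b \<and> (\<forall>z. z0 \<le> z \<and> z \<le> 2*z0 \<longrightarrow> b \<le> L z \<and> L z \<le> B)"
proof -
  obtain ZL where ZL: "\<And>z. z \<ge> ZL \<Longrightarrow> L z \<noteq> 0" using Lnz by (auto simp: eventually_at_top_linorder)
  have ev1: "eventually (\<lambda>n. 2 \<le> real n powr \<epsilon>0) sequentially" using eps0 by real_asymp
  have ev2: "eventually (\<lambda>n::nat. max Z ZL \<le> sqrt (real n)) sequentially" by real_asymp
  have ev3: "eventually (\<lambda>n::nat. 1 \<le> n) sequentially" by (rule eventually_ge_at_top)
  from eventually_conj[OF U2 eventually_conj[OF ev1 eventually_conj[OF ev2 ev3]]]
  obtain n where n: "\<forall>z\<in>{real n powr (1/2 - \<epsilon>0)..real n powr (1/2 + \<epsilon>0)}.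
            0 \<le> GG z \<and> GG z \<le> 2 * FF n z \<and> FF n z \<le> 2 * GG z"
    "2 \<le> real n powr \<epsilon>0" "max Z ZL \<le> sqrt (real n)" "1 \<le> n"
    by (auto simp: eventually_sequentially)
  define z0 where "z0 = sqrt (real n)"
  have z0p: "0 < z0" using n(4) by (simp add: z0_def)
  have inr: "z \<in> {real n powr (1/2 - \<epsilon>0)..real n powr (1/2 + \<epsilon>0)}" if z: "z0 \<le> z" "z \<le> 2*z0" for z
  proof -
    have "real n powr (1/2 - \<epsilon>0) \<le> real n powr (1/2)" using n(4) eps0 by (intro powr_mono) auto
    also have "\<dots> = z0" by (simp add: z0_def powr_half_sqrt)
    finally have l: "real n powr (1/2 - \<epsilon>0) \<le> z" using z by simp
    have "z \<le> 2 * z0" by (rule z(2))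
    also have "\<dots> \<le> real n powr \<epsilon>0 * real n powr (1/2)"
      using n(2) z0p by (simp add: z0_def powr_half_sqrt mult_right_mono)
    also have "\<dots> = real n powr (1/2 + \<epsilon>0)" by (simp add: powr_add[symmetric] add.commute)
    finally show ?thesis using l by simp
  qed
  have LG: "L z = GG z * z powr \<alpha>" if "0 < z" for z
    using that by (simp add: GG_def mult.assoc powr_add[symmetric])
  have g2: "0 < GG (2*z0)"
  proof -
    have "ZL \<le> z0" using n(3) by (simp add: z0_def)
    then have "ZL \<le> 2*z0" using z0p by linarith
    then have "L (2*z0) \<noteq> 0" using ZL[of "2*z0"] by simp
    moreover have "0 \<le> GG (2*z0)" using n(1) inr[of "2*z0"] z0p by auto
    moreover have "0 < (2*z0) powr (-\<alpha>)" using z0p by simp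
    ultimately have "GG (2*z0) \<noteq> 0" "0 \<le> GG (2*z0)" by (auto simp: GG_def)
    then show ?thesis by linarith
  qed
  have F2: "GG (2*z0) \<le> 2 * FF n (2*z0)" using n(1) inr[of "2*z0"] z0p by auto
  show ?thesis
  proof (intro exI conjI allI impI)
    show "z0 \<ge> Z" using n(3) by (simp add: z0_def)
    show "0 < GG (2*z0) / 4 * z0 powr \<alpha>" using g2 z0p by simp
    fix z assume z: "z0 \<le> z \<and> z \<le> 2*z0"
    have zr: "z \<in> {real n powr (1/2 - \<epsilon>0)..real n powr (1/2 + \<epsilon>0)}" using inr z by auto
    have zp: "0 < z" using z z0p by simp
    have gz: "0 \<le> GG z" "GG z \<le> 2 * FF n z" "FF n z \<le> 2 * GG z" using n(1) zr by auto
    have "L z = GG z * z powr \<alpha>" by (rule LG[OF zp])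
    also have "\<dots> \<le> 2 * (2*z0) powr \<alpha>"
    proof (rule mult_mono)
      show "GG z \<le> 2" using gz FF_01[of n z] by linarith
      show "z powr \<alpha> \<le> (2*z0) powr \<alpha>" using z zp alpha by (intro powr_mono2) auto
    qed auto
    finally show "L z \<le> 2 * (2*z0) powr \<alpha>" .
    have "GG (2*z0) / 4 \<le> GG z"
      using F2 gz FF_anti[of z "2*z0" n] z by linarith
    moreover have "z0 powr \<alpha> \<le> z powr \<alpha>" using z z0p alpha by (intro powr_mono2) auto
    ultimately have "GG (2*z0) / 4 * z0 powr \<alpha> \<le> GG z * z powr \<alpha>"
      using g2 z0p by (intro mult_mono) auto
    then show "GG (2*z0) / 4 * z0 powr \<alpha> \<le> L z" using LG[OF zp] by simp
  qed
qed

lemma potter_L: "0 < \<delta> \<Longrightarrow> eventually (\<lambda>z. z powr (-\<delta>) \<le> L z \<and> L z \<le> z powr \<delta>) at_top"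
  by (rule potter[OF sv_t H]) simp_all

lemma Lpos: "eventually (\<lambda>z. 0 < L z) at_top"
proof -
  have "eventually (\<lambda>z. z powr (-1) \<le> L z \<and> L z \<le> z powr 1) at_top" by (rule potter_L) simp
  moreover have "eventually (\<lambda>z::real. 0 < z) at_top" by (rule eventually_gt_at_top)
  ultimately show ?thesis
  proof eventually_elim
    case (elim z)
    then have "0 < z powr (-1)" by simp
    then show ?case using elim by linarith
  qed
qed

end

context rigc begin

definition yy :: "nat \<Rightarrow> real" where "yy n = sqrt (real n * ln (real n))"

lemma yy_lim: "filterlim yy at_top sequentially"
  unfolding yy_def by real_asymp

lemma ev_yy: "eventually Q at_top \<Longrightarrow> eventually (\<lambda>n. Q (yy n)) sequentially"
  using yy_lim by (simp add: filterlim_iff)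

lemma Lyy_pos: "eventually (\<lambda>n. 0 < L (yy n)) sequentially"
  by (rule ev_yy[OF Lpos])

lemma KK_pos: "eventually (\<lambda>n. 0 < K \<alpha> L n) sequentially"
proof -
  have "eventually (\<lambda>n::nat. 2 \<le> n) sequentially" by (rule eventually_ge_at_top)
  with Lyy_pos show ?thesis
  proof eventually_elim
    case (elim n)
    then have "0 < ln (real n)" by simp
    then show ?case using elim by (simp add: K_def yy_def)
  qed
qed

lemma yy_ratio: "0 < s \<Longrightarrow> ((\<lambda>n. L (s * yy n) / L (yy n)) \<longlongrightarrow> 1) sequentially"
  using filterlim_compose[OF sv_t yy_lim] by simp

lemma KL:
  assumes s: "0 < s"
  shows "(\<lambda>n. real n * FF n (s * yy n)) \<sim>[sequentially] (\<lambda>n. s powr (-\<alpha>) * K \<alpha> L n)"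
proof -
  define x where "x n = max (real n powr (1/2 - \<epsilon>0)) (min (real n powr (1/2 + \<epsilon>0)) (s * yy n))" for n
  have xr: "real n powr (1/2 - \<epsilon>0) \<le> x n \<and> x n \<le> real n powr (1/2 + \<epsilon>0)" for n
    using range_le[of n] by (auto simp: x_def)
  have e1: "eventually (\<lambda>n::nat. s * sqrt (real n * ln (real n)) \<le> real n powr (1/2 + \<epsilon>0)) sequentially"
    using s eps0 by real_asymp
  have e2: "eventually (\<lambda>n::nat. real n powr (1/2 - \<epsilon>0) \<le> s * sqrt (real n * ln (real n))) sequentially"
    using s eps0 by real_asymp
  have evx: "eventually (\<lambda>n. x n = s * yy n) sequentially"
    using eventually_conj[OF e1 e2] by eventually_elim (auto simp: x_def yy_def)
  have "(\<lambda>n. FF n (x n)) \<sim>[sequentially] (\<lambda>n. GG (x n))"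
    using condPL[of x, OF xr] by (simp add: FF_def GG_def)
  then have "(\<lambda>n. FF n (s * yy n)) \<sim>[sequentially] (\<lambda>n. GG (s * yy n))"
    by (rule asymp_equiv_cong[THEN iffD1, rotated 2]) (use evx in \<open>auto elim: eventually_mono\<close>)
  then have a1: "(\<lambda>n. real n * FF n (s * yy n)) \<sim>[sequentially] (\<lambda>n. real n * GG (s * yy n))"
    by (intro asymp_equiv_mult asymp_equiv_refl)
  have a2: "(\<lambda>n. real n * GG (s * yy n)) \<sim>[sequentially] (\<lambda>n. s powr (-\<alpha>) * K \<alpha> L n)"
  proof (rule asymp_equivI')
    have "eventually (\<lambda>n. L (s * yy n) / L (yy n) = real n * GG (s * yy n) / (s powr (-\<alpha>) * K \<alpha> L n)) sequentially"
      using Lyy_pos eventually_ge_at_top[of "2::nat"]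
    proof eventually_elim
      case (elim n)
      have n2: "2 \<le> real n" using elim by simp
      have lnp: "0 < ln (real n)" using elim by simp
      have yp: "0 < yy n" using lnp n2 by (simp add: yy_def)
      have "(s * yy n) powr (-\<alpha>) = s powr (-\<alpha>) * yy n powr (-\<alpha>)"
        using s yp by (simp add: powr_mult)
      also have "yy n powr (-\<alpha>) = real n powr (-\<alpha>/2) * ln (real n) powr (-\<alpha>/2)"
        using lnp n2 by (simp add: yy_def powr_half_sqrt[symmetric] powr_powr powr_mult)
      finally have sy: "(s * yy n) powr (-\<alpha>) = s powr (-\<alpha>) * (real n powr (-\<alpha>/2) * ln (real n) powr (-\<alpha>/2))" .
      have nn: "real n * real n powr (-\<alpha>/2) = real n powr (1 - \<alpha>/2)"
      proof -
        have "real n powr (1 - \<alpha>/2) = real n powr (1 + (-\<alpha>/2))" by simp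
        also have "\<dots> = real n powr 1 * real n powr (-\<alpha>/2)" by (rule powr_add)
        finally show ?thesis using n2 by simp
      qed
      have "real n * GG (s * yy n) = L (s * yy n) * s powr (-\<alpha>) * (real n * real n powr (-\<alpha>/2)) * ln (real n) powr (-\<alpha>/2)"
        unfolding GG_def sy by (simp add: mult_ac)
      also have "\<dots> = L (s * yy n) * s powr (-\<alpha>) * real n powr (1 - \<alpha>/2) * ln (real n) powr (-\<alpha>/2)"
        unfolding nn ..
      finally have num: "real n * GG (s * yy n) = L (s * yy n) * s powr (-\<alpha>) * real n powr (1 - \<alpha>/2) * ln (real n) powr (-\<alpha>/2)" .
      have den: "s powr (-\<alpha>) * K \<alpha> L n = s powr (-\<alpha>) * L (yy n) * real n powr (1 - \<alpha>/2) * ln (real n) powr (-\<alpha>/2)"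
        by (simp add: K_def yy_def mult_ac)
      have pos: "0 < s powr (-\<alpha>)" "0 < real n powr (1 - \<alpha>/2)" "0 < ln (real n) powr (-\<alpha>/2)"
        using s n2 lnp by auto
      show ?case unfolding num den using elim pos by (simp add: field_simps)
    qed
    then show "((\<lambda>n. real n * GG (s * yy n) / (s powr (-\<alpha>) * K \<alpha> L n)) \<longlongrightarrow> 1) sequentially"
      by (rule Lim_transform_eventually[OF yy_ratio[OF s]])
  qed
  show ?thesis using a1 a2 by (rule asymp_equiv_trans)
qed

lemma KL_ratio:
  assumes s: "0 < s"
  shows "((\<lambda>n. real n * FF n (s * yy n) / K \<alpha> L n) \<longlongrightarrow> s powr (-\<alpha>)) sequentially"
proof -
  have "((\<lambda>n. real n * FF n (s * yy n) / (s powr (-\<alpha>) * K \<alpha> L n)) \<longlongrightarrow> 1) sequentially"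
    by (rule asymp_equivD_strong[OF KL[OF s]]) (use KK_pos s in \<open>auto elim: eventually_mono\<close>)
  then have "((\<lambda>n. s powr (-\<alpha>) * (real n * FF n (s * yy n) / (s powr (-\<alpha>) * K \<alpha> L n))) \<longlongrightarrow> s powr (-\<alpha>) * 1) sequentially"
    by (intro tendsto_mult tendsto_const)
  then show ?thesis using s by simp
qed

end

context rigc begin

definition e1 :: "nat \<Rightarrow> real" where "e1 n = max 0 (ln (L (yy n)))"
definition AA :: "nat \<Rightarrow> real" where "AA n = (1 - \<alpha>/2) * ln (real n) + e1 n"
definition th :: "nat \<Rightarrow> real" where "th n = theta2 \<alpha> L n (m n)"
definition xx :: "nat \<Rightarrow> real" where "xx n = sqrt (real n / real (m n)) * th n"
definition qq :: "nat \<Rightarrow> real" where "qq n = measure_pmf.prob (P n) {k. th n < real k}"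
definition tt :: real where "tt = sqrt (1 - \<alpha>/2)"

lemma tt_pos: "0 < tt" using alpha by (simp add: tt_def)

lemma e1_nonneg: "0 \<le> e1 n" by (simp add: e1_def)

lemma AA_nonneg: "1 \<le> n \<Longrightarrow> 0 \<le> AA n"
  using alpha e1_nonneg[of n] by (simp add: AA_def)

lemma th_eq: "th n = sqrt (real (m n) * AA n)"
  unfolding th_def theta2_def AA_def e1_def yy_def
  by (rule arg_cong[where f=sqrt]) (simp only: distrib_left mult.commute mult.left_commute mult.assoc)

lemma th_nonneg: "1 \<le> n \<Longrightarrow> 0 \<le> th n" using AA_nonneg[of n] by (simp add: th_eq)

lemma th_sq: "1 \<le> n \<Longrightarrow> (th n)\<^sup>2 = real (m n) * AA n"
  using AA_nonneg[of n] by (simp add: th_eq)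

lemma xx_eq: "1 \<le> n \<Longrightarrow> xx n = sqrt (real n * AA n)"
proof -
  assume n: "1 \<le> n"
  have mp: "0 < real (m n)" using m_pos[of n] by simp
  have "xx n = sqrt (real n / real (m n) * (real (m n) * AA n))"
    by (simp only: xx_def th_eq real_sqrt_mult)
  also have "\<dots> = sqrt (real n * AA n)" using mp by simp
  finally show ?thesis .
qed

lemma e1_ratio: "((\<lambda>n. e1 n / ln (real n)) \<longlongrightarrow> 0) sequentially"
proof (rule tendstoI)
  fix \<epsilon> :: real assume \<epsilon>: "0 < \<epsilon>"
  have ev1: "eventually (\<lambda>n. L (yy n) \<le> yy n powr (\<epsilon>/2)) sequentially"
    using ev_yy[OF potter_L[of "\<epsilon>/2"]] \<epsilon> by (auto elim: eventually_mono)
  have ev2: "eventually (\<lambda>n::nat. 3 \<le> n) sequentially" by (rule eventually_ge_at_top)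
  show "eventually (\<lambda>n. dist (e1 n / ln (real n)) 0 < \<epsilon>) sequentially"
    using ev1 Lyy_pos ev2
  proof eventually_elim
    case (elim n)
    have n3: "3 \<le> real n" using elim by simp
    have lnp: "1 \<le> ln (real n)"
    proof -
      have "exp 1 \<le> (3::real)" using exp_le by linarith
      then have "exp 1 \<le> real n" using n3 by linarith
      then show ?thesis using n3 by (subst ln_ge_iff) auto
    qed
    have yp: "0 < yy n" using lnp n3 by (simp add: yy_def)
    have lnln: "ln (ln (real n)) \<le> ln (real n)"
      using lnp ln_less_self[of "ln (real n)"] by linarith
    have lny: "ln (yy n) = (ln (real n) + ln (ln (real n))) / 2"
      using lnp n3 by (simp add: yy_def ln_sqrt ln_mult)
    have "ln (L (yy n)) \<le> ln (yy n powr (\<epsilon>/2))"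
      using elim yp by (subst ln_le_cancel_iff) auto
    also have "\<dots> = \<epsilon>/2 * ln (yy n)" using yp by simp
    also have "\<dots> \<le> \<epsilon>/2 * ln (real n)" unfolding lny using lnln \<epsilon> by (intro mult_left_mono) auto
    finally have "ln (L (yy n)) \<le> \<epsilon>/2 * ln (real n)" .
    moreover have "0 \<le> \<epsilon>/2 * ln (real n)" using \<epsilon> lnp by simp
    ultimately have "e1 n \<le> \<epsilon>/2 * ln (real n)" unfolding e1_def by (rule max.boundedI[rotated])
    define X where "X = e1 n / ln (real n)"
    have "X \<le> \<epsilon>/2" using lnp \<open>e1 n \<le> \<epsilon>/2 * ln (real n)\<close> by (simp add: X_def divide_le_eq)
    moreover have "0 \<le> X" using e1_nonneg[of n] lnp by (simp add: X_def)
    ultimately have "dist X 0 < \<epsilon>" using \<epsilon> by (simp add: dist_real_def)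
    then show ?case by (simp add: X_def)
  qed
qed

lemma xy_ratio: "((\<lambda>n. xx n / yy n) \<longlongrightarrow> tt) sequentially"
proof -
  have "((\<lambda>n. sqrt ((1 - \<alpha>/2) + e1 n / ln (real n))) \<longlongrightarrow> sqrt ((1 - \<alpha>/2) + 0)) sequentially"
    by (intro tendsto_real_sqrt tendsto_add tendsto_const e1_ratio)
  then have t: "((\<lambda>n. sqrt ((1 - \<alpha>/2) + e1 n / ln (real n))) \<longlongrightarrow> tt) sequentially"
    by (simp add: tt_def)
  have "eventually (\<lambda>n. sqrt ((1 - \<alpha>/2) + e1 n / ln (real n)) = xx n / yy n) sequentially"
    using eventually_ge_at_top[of "2::nat"]
  proof eventually_elim
    case (elim n)
    then have lnp: "0 < ln (real n)" and np: "0 < real n" by auto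
    have "xx n / yy n = sqrt (real n * AA n) / sqrt (real n * ln (real n))"
      using elim by (simp add: xx_eq yy_def)
    also have "\<dots> = sqrt ((real n * AA n) / (real n * ln (real n)))" by (simp only: real_sqrt_divide)
    also have "(real n * AA n) / (real n * ln (real n)) = (1 - \<alpha>/2) + e1 n / ln (real n)"
      using lnp np by (simp add: AA_def field_simps)
    finally show ?case by simp
  qed
  then show ?thesis by (rule Lim_transform_eventually[OF t])
qed

lemma qq_FF:
  assumes n: "1 \<le> n"
  shows "s1 * yy n \<le> xx n \<Longrightarrow> qq n \<le> FF n (s1 * yy n)"
    and "xx n < s2 * yy n \<Longrightarrow> FF n (s2 * yy n) \<le> qq n"
proof -
  define c where "c = sqrt (real n / real (m n))"
  have cp: "0 < c" using n m_pos[of n] by (simp add: c_def)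
  have q: "qq n = measure_pmf.prob (P n) {k. xx n < c * real k}"
  proof -
    have "{k. th n < real k} = {k. xx n < c * real k}"
      using cp by (auto simp: xx_def c_def[symmetric])
    then show ?thesis by (simp add: qq_def)
  qed
  show "s1 * yy n \<le> xx n \<Longrightarrow> qq n \<le> FF n (s1 * yy n)"
    unfolding q FF_def c_def[symmetric] by (intro measure_pmf.finite_measure_mono) auto
  show "xx n < s2 * yy n \<Longrightarrow> FF n (s2 * yy n) \<le> qq n"
    unfolding q FF_def c_def[symmetric] by (intro measure_pmf.finite_measure_mono) auto
qed

lemma K_lim: "filterlim (K \<alpha> L) at_top sequentially"
proof -
  define d where "d = 1 - \<alpha>/2"
  have d: "0 < d" using alpha by (simp add: d_def)
  define a where "a = d/2"
  define b where "b = \<alpha>/2 + d/2"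
  have ab: "0 < a" "0 < b" using d alpha by (auto simp: a_def b_def)
  have lim0: "filterlim (\<lambda>n::nat. real n powr a * ln (real n) powr (-b)) at_top sequentially"
    using ab by real_asymp
  have "eventually (\<lambda>n::nat. real n powr a * ln (real n) powr (-b) = sqrt (real n * ln (real n)) powr (-d) * real n powr (1 - \<alpha>/2) * ln (real n) powr (-\<alpha>/2)) sequentially"
    using eventually_ge_at_top[of "2::nat"]
  proof eventually_elim
    case (elim n)
    then have lnp: "0 < ln (real n)" and np: "0 < real n" by auto
    have "sqrt (real n * ln (real n)) powr (-d) = real n powr (-d/2) * ln (real n) powr (-d/2)"
      using lnp np by (simp add: powr_half_sqrt[symmetric] powr_powr powr_mult)
    moreover have "real n powr a = real n powr (-d/2) * real n powr (1 - \<alpha>/2)"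
    proof -
      have "a = -d/2 + (1 - \<alpha>/2)" by (simp add: a_def d_def field_simps)
      then have "real n powr a = real n powr (-d/2 + (1 - \<alpha>/2))" by simp
      also have "\<dots> = real n powr (-d/2) * real n powr (1 - \<alpha>/2)" by (rule powr_add)
      finally show ?thesis .
    qed
    moreover have "ln (real n) powr (-b) = ln (real n) powr (-d/2) * ln (real n) powr (-\<alpha>/2)"
    proof -
      have "-b = -d/2 + (-\<alpha>/2)" by (simp add: b_def field_simps)
      then have "ln (real n) powr (-b) = ln (real n) powr (-d/2 + (-\<alpha>/2))" by simp
      also have "\<dots> = ln (real n) powr (-d/2) * ln (real n) powr (-\<alpha>/2)" by (rule powr_add)
      finally show ?thesis .
    qed
    ultimately show ?case by (simp add: mult_ac)
  qed
  note evq = this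
  have lim: "filterlim (\<lambda>n::nat. sqrt (real n * ln (real n)) powr (-d) * real n powr (1 - \<alpha>/2) * ln (real n) powr (-\<alpha>/2)) at_top sequentially"
    by (rule filterlim_at_top_mono[OF lim0]) (use evq in \<open>auto elim: eventually_mono\<close>)
  have ev: "eventually (\<lambda>n. yy n powr (-d) \<le> L (yy n)) sequentially"
    using ev_yy[OF potter_L[OF d]] by (auto elim: eventually_mono)
  have "eventually (\<lambda>n. sqrt (real n * ln (real n)) powr (-d) * real n powr (1 - \<alpha>/2) * ln (real n) powr (-\<alpha>/2) \<le> K \<alpha> L n) sequentially"
    using ev
  proof eventually_elim
    case (elim n)
    then show ?case unfolding K_def yy_def[symmetric]
      by (intro mult_right_mono) auto
  qed
  then show ?thesis by (rule filterlim_at_top_mono[OF lim])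
qed

end

context rigc begin

definition mu :: "nat \<Rightarrow> real" where "mu n = real n * qq n"
definition cc :: real where "cc = (1 - \<alpha>/2) powr (-\<alpha>/2)"

lemma cc_pos: "0 < cc" using alpha by (simp add: cc_def)

lemma cc_tt: "cc = tt powr (-\<alpha>)"
  using alpha by (simp add: cc_def tt_def powr_half_sqrt[symmetric] powr_powr)

lemma mu_nonneg: "0 \<le> mu n" by (simp add: mu_def qq_def)

lemma mu_ratio: "((\<lambda>n. mu n / (cc * K \<alpha> L n)) \<longlongrightarrow> 1) sequentially"
proof (rule tendstoI)
  fix \<epsilon> :: real assume \<epsilon>: "0 < \<epsilon>"
  define \<gamma> where "\<gamma> = \<epsilon> * cc / 2"
  have \<gamma>: "0 < \<gamma>" using \<epsilon> cc_pos by (simp add: \<gamma>_def)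
  have "((\<lambda>s. s powr (-\<alpha>)) \<longlongrightarrow> tt powr (-\<alpha>)) (at tt)"
    using tt_pos by (intro tendsto_intros) auto
  then have "eventually (\<lambda>s. dist (s powr (-\<alpha>)) cc < \<gamma>) (at tt)"
    unfolding cc_tt using \<gamma> by (rule tendstoD)
  then obtain d where d: "0 < d" "\<And>s. s \<noteq> tt \<Longrightarrow> dist s tt < d \<Longrightarrow> dist (s powr (-\<alpha>)) cc < \<gamma>"
    by (auto simp: eventually_at)
  define \<eta> where "\<eta> = min (d/2) (tt/2)"
  have \<eta>: "0 < \<eta>" "\<eta> < d" "\<eta> < tt" using d tt_pos by (auto simp: \<eta>_def)
  define s1 where "s1 = tt - \<eta>"
  define s2 where "s2 = tt + \<eta>"
  have s12: "0 < s1" "0 < s2" using \<eta> tt_pos by (auto simp: s1_def s2_def)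
  have c1: "\<bar>s1 powr (-\<alpha>) - cc\<bar> < \<gamma>" using d(2)[of s1] \<eta> by (simp add: s1_def dist_real_def)
  have c2: "\<bar>s2 powr (-\<alpha>) - cc\<bar> < \<gamma>" using d(2)[of s2] \<eta> by (simp add: s2_def dist_real_def)
  have ev1: "eventually (\<lambda>n. dist (real n * FF n (s1 * yy n) / K \<alpha> L n) (s1 powr (-\<alpha>)) < \<gamma>) sequentially"
    using KL_ratio[OF s12(1)] \<gamma> by (rule tendstoD)
  have ev2: "eventually (\<lambda>n. dist (real n * FF n (s2 * yy n) / K \<alpha> L n) (s2 powr (-\<alpha>)) < \<gamma>) sequentially"
    using KL_ratio[OF s12(2)] \<gamma> by (rule tendstoD)
  have ev3: "eventually (\<lambda>n. dist (xx n / yy n) tt < \<eta>/2) sequentially"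
    using xy_ratio \<eta> by (intro tendstoD) auto
  have ev4: "eventually (\<lambda>n::nat. 2 \<le> n) sequentially" by (rule eventually_ge_at_top)
  show "eventually (\<lambda>n. dist (mu n / (cc * K \<alpha> L n)) 1 < \<epsilon>) sequentially"
    using ev1 ev2 ev3 ev4 KK_pos
  proof eventually_elim
    case (elim n)
    have n1: "1 \<le> n" using elim by simp
    have yp: "0 < yy n" using elim by (simp add: yy_def)
    have Kp: "0 < K \<alpha> L n" using elim by simp
    have "\<bar>xx n / yy n - tt\<bar> < \<eta>/2" using elim by (simp add: dist_real_def)
    then have "xx n / yy n - tt < \<eta>/2 \<and> -(xx n / yy n - tt) < \<eta>/2"
      by (simp only: abs_less_iff)
    then have a1: "tt - \<eta>/2 < xx n / yy n" and a2: "xx n / yy n < tt + \<eta>/2"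
      by linarith+
    have b1: "(tt - \<eta>/2) * yy n < xx n" using a1 yp by (simp add: pos_less_divide_eq)
    have b2: "xx n < (tt + \<eta>/2) * yy n" using a2 yp by (simp add: pos_divide_less_eq)
    have "s1 * yy n \<le> (tt - \<eta>/2) * yy n" using yp \<eta> by (intro mult_right_mono) (auto simp: s1_def)
    moreover have "(tt + \<eta>/2) * yy n \<le> s2 * yy n" using yp \<eta> by (intro mult_right_mono) (auto simp: s2_def)
    ultimately have "s1 * yy n \<le> xx n" "xx n < s2 * yy n" using b1 b2 by linarith+
    then have q: "qq n \<le> FF n (s1 * yy n)" "FF n (s2 * yy n) \<le> qq n"
      using qq_FF[OF n1] by auto
    define X where "X = real n * qq n / K \<alpha> L n"
    define Y1 where "Y1 = real n * FF n (s1 * yy n) / K \<alpha> L n"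
    define Y2 where "Y2 = real n * FF n (s2 * yy n) / K \<alpha> L n"
    have "X \<le> Y1" "Y2 \<le> X" unfolding X_def Y1_def Y2_def using q Kp
      by (auto intro!: divide_right_mono mult_left_mono)
    moreover have "\<bar>Y1 - s1 powr (-\<alpha>)\<bar> < \<gamma>" "\<bar>Y2 - s2 powr (-\<alpha>)\<bar> < \<gamma>"
      using elim by (simp_all add: Y1_def Y2_def dist_real_def)
    ultimately have "\<bar>X - cc\<bar> < 2 * \<gamma>" using c1 c2 by (simp add: abs_less_iff)
    then have "\<bar>X - cc\<bar> < \<epsilon> * cc" by (simp add: \<gamma>_def)
    then have "\<bar>X / cc - 1\<bar> < \<epsilon>" using cc_pos
      by (simp add: abs_less_iff field_simps)
    moreover have "mu n / (cc * K \<alpha> L n) = X / cc" by (simp add: mu_def X_def field_simps)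
    ultimately show ?case by (simp add: dist_real_def)
  qed
qed

lemma mu_lim: "filterlim mu at_top sequentially"
proof -
  have "filterlim (\<lambda>n. mu n / (cc * K \<alpha> L n) * (cc * K \<alpha> L n)) at_top sequentially"
  proof (rule filterlim_tendsto_pos_mult_at_top[OF mu_ratio])
    show "filterlim (\<lambda>n. cc * K \<alpha> L n) at_top sequentially"
      using K_lim cc_pos by (intro filterlim_tendsto_pos_mult_at_top[OF tendsto_const]) auto
  qed simp
  note l = this
  have e: "eventually (\<lambda>n. mu n / (cc * K \<alpha> L n) * (cc * K \<alpha> L n) = mu n) sequentially"
    using KK_pos by eventually_elim (use cc_pos in simp)
  show ?thesis by (rule filterlim_at_top_mono[OF l], rule eventually_mono[OF e], rule eq_refl)
qed

lemma mu_exp: "((\<lambda>n. mu n * exp (- (th n)\<^sup>2 / real (m n))) \<longlongrightarrow> 0) sequentially"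
proof (rule tendsto_sandwich)
  show "eventually (\<lambda>n. 0 \<le> mu n * exp (- (th n)\<^sup>2 / real (m n))) sequentially"
    by (intro always_eventually allI mult_nonneg_nonneg mu_nonneg) simp
  have lim: "((\<lambda>n. mu n / (cc * K \<alpha> L n) * cc * ln (real n) powr (-\<alpha>/2)) \<longlongrightarrow> 1 * cc * 0) sequentially"
  proof (intro tendsto_mult mu_ratio tendsto_const)
    show "((\<lambda>n. ln (real n) powr (-\<alpha>/2)) \<longlongrightarrow> 0) sequentially" using alpha by real_asymp
  qed
  then show "((\<lambda>n. mu n / (cc * K \<alpha> L n) * cc * ln (real n) powr (-\<alpha>/2)) \<longlongrightarrow> 0) sequentially" by simp
  show "((\<lambda>n. 0) \<longlongrightarrow> (0::real)) sequentially" by simp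
  show "eventually (\<lambda>n. mu n * exp (- (th n)\<^sup>2 / real (m n)) \<le> mu n / (cc * K \<alpha> L n) * cc * ln (real n) powr (-\<alpha>/2)) sequentially"
    using KK_pos Lyy_pos eventually_ge_at_top[of "2::nat"]
  proof eventually_elim
    case (elim n)
    have n1: "1 \<le> n" using elim by simp
    have np: "0 < real n" using elim by simp
    have lnp: "0 < ln (real n)" using elim by simp
    have mp: "0 < real (m n)" using m_pos[of n] by simp
    have Kp: "0 < K \<alpha> L n" and Lp: "0 < L (yy n)" using elim by auto
    have "exp (- (th n)\<^sup>2 / real (m n)) = exp (- AA n)" using th_sq[OF n1] mp by simp
    also have "\<dots> = exp (- ((1 - \<alpha>/2) * ln (real n))) * exp (- e1 n)"
      by (simp add: AA_def exp_add[symmetric])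
    also have "exp (- ((1 - \<alpha>/2) * ln (real n))) = real n powr (-(1 - \<alpha>/2))"
      using np by (simp add: powr_def algebra_simps)
    finally have ex: "exp (- (th n)\<^sup>2 / real (m n)) = real n powr (-(1 - \<alpha>/2)) * exp (- e1 n)" .
    have Le: "L (yy n) * exp (- e1 n) \<le> 1"
    proof -
      have "L (yy n) = exp (ln (L (yy n)))" using Lp by simp
      also have "\<dots> \<le> exp (e1 n)" by (simp add: e1_def)
      finally show ?thesis by (simp add: exp_minus field_simps)
    qed
    have KK: "K \<alpha> L n * real n powr (-(1 - \<alpha>/2)) = L (yy n) * ln (real n) powr (-\<alpha>/2)"
    proof -
      have "real n powr (1 - \<alpha>/2) * real n powr (-(1 - \<alpha>/2)) = 1"
        using np by (simp add: powr_add[symmetric])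
      then show ?thesis by (simp add: K_def yy_def mult_ac)
    qed
    have "mu n * exp (- (th n)\<^sup>2 / real (m n)) = mu n / (cc * K \<alpha> L n) * cc * (K \<alpha> L n * real n powr (-(1 - \<alpha>/2))) * exp (- e1 n)"
      using Kp cc_pos unfolding ex by (simp add: field_simps)
    also have "\<dots> = mu n / (cc * K \<alpha> L n) * cc * ln (real n) powr (-\<alpha>/2) * (L (yy n) * exp (- e1 n))"
      unfolding KK by (simp add: mult_ac)
    also have "\<dots> \<le> mu n / (cc * K \<alpha> L n) * cc * ln (real n) powr (-\<alpha>/2) * 1"
    proof (rule mult_left_mono[OF Le])
      show "0 \<le> mu n / (cc * K \<alpha> L n) * cc * ln (real n) powr (-\<alpha>/2)"
        using mu_nonneg[of n] Kp cc_pos by simp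
    qed
    finally show ?case by simp
  qed
qed

end

lemma var_pmf:
  fixes f :: "'a \<Rightarrow> real"
  assumes fin: "finite (set_pmf M)"
  shows "measure_pmf.expectation M (\<lambda>x. (f x - c)\<^sup>2)
       = measure_pmf.expectation M (\<lambda>x. (f x)\<^sup>2) - 2 * c * measure_pmf.expectation M f + c\<^sup>2"
proof -
  have e: "\<And>g. measure_pmf.expectation M g = (\<Sum>x\<in>set_pmf M. g x * pmf M x)"
    by (rule integral_measure_pmf_real) (use fin in auto)
  have s1: "(\<Sum>x\<in>set_pmf M. pmf M x) = 1" by (rule sum_pmf_eq_1) (use fin in auto)
  have "(\<Sum>x\<in>set_pmf M. (f x - c)\<^sup>2 * pmf M x)
      = (\<Sum>x\<in>set_pmf M. (f x)\<^sup>2 * pmf M x - 2 * c * (f x * pmf M x) + c\<^sup>2 * pmf M x)"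
    by (intro sum.cong refl) (simp add: power2_diff algebra_simps)
  also have "\<dots> = (\<Sum>x\<in>set_pmf M. (f x)\<^sup>2 * pmf M x) - 2 * c * (\<Sum>x\<in>set_pmf M. f x * pmf M x) + c\<^sup>2 * (\<Sum>x\<in>set_pmf M. pmf M x)"
    by (simp add: sum.distrib sum_subtractf sum_distrib_left)
  finally show ?thesis by (simp add: e s1)
qed

lemma cheb_pmf:
  fixes f :: "'a \<Rightarrow> real"
  assumes fin: "finite (set_pmf M)" and a: "0 < a"
  shows "measure_pmf.prob M {x. a \<le> \<bar>f x - c\<bar>} \<le> measure_pmf.expectation M (\<lambda>x. (f x - c)\<^sup>2) / a\<^sup>2"
proof -
  have "measure_pmf.prob M {x \<in> space (measure_pmf M). a \<le> \<bar>f x - c\<bar>}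
      \<le> measure_pmf.expectation M (\<lambda>x. (f x - c) ^ 2) / a\<^sup>2"
    by (rule measure_pmf.second_moment_method) (use a fin in \<open>auto intro: integrable_measure_pmf_finite\<close>)
  then show ?thesis by simp
qed

lemma markov_pmf:
  fixes f :: "'a \<Rightarrow> real"
  assumes fin: "finite (set_pmf M)" and a: "0 < a" and nn: "\<And>x. 0 \<le> f x"
  shows "measure_pmf.prob M {x. a \<le> f x} \<le> measure_pmf.expectation M f / a"
proof -
  have "measure_pmf.prob M {x \<in> space (measure_pmf M). a \<le> f x} \<le> measure_pmf.expectation M f / a"
    by (rule integral_Markov_inequality_measure[where A=UNIV]) (use a fin nn in \<open>auto intro: integrable_measure_pmf_finite\<close>)
  then show ?thesis by simp
qed

context rigc begin

definition RR :: "nat \<Rightarrow> (nat \<Rightarrow> nat set) pmf" where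
  "RR n = Pi_pmf {1..n} {} (\<lambda>_. attr_pmf (m n) (P n))"

definition XX :: "nat \<Rightarrow> (nat \<Rightarrow> nat set) \<Rightarrow> real" where
  "XX n S = real (card (Vset (th n) n S))"

definition NN :: "nat \<Rightarrow> (nat \<Rightarrow> nat set) \<Rightarrow> real" where
  "NN n S = real (card (bad S (Vset (th n) n S)))"

lemma finRR: "finite (set_pmf (RR n))"
  unfolding RR_def by (rule fin_RIG[OF P_supp])

lemma cheb_X:
  assumes a: "0 < a"
  shows "measure_pmf.prob (RR n) {S. a \<le> \<bar>XX n S - mu n\<bar>} \<le> mu n / a\<^sup>2"
proof -
  have "measure_pmf.prob (RR n) {S. a \<le> \<bar>XX n S - mu n\<bar>}
      \<le> measure_pmf.expectation (RR n) (\<lambda>S. (XX n S - mu n)\<^sup>2) / a\<^sup>2"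
    by (rule cheb_pmf[OF finRR a])
  also have "measure_pmf.expectation (RR n) (\<lambda>S. (XX n S - mu n)\<^sup>2)
      = measure_pmf.expectation (RR n) (\<lambda>S. (XX n S)\<^sup>2) - 2 * mu n * measure_pmf.expectation (RR n) (XX n) + (mu n)\<^sup>2"
    by (rule var_pmf[OF finRR])
  also have "measure_pmf.expectation (RR n) (XX n) = mu n"
    unfolding RR_def XX_def mu_def qq_def by (rule expectation_X[OF P_supp])
  also have "measure_pmf.expectation (RR n) (\<lambda>S. (XX n S)\<^sup>2) \<le> mu n + (mu n)\<^sup>2"
    unfolding RR_def XX_def mu_def qq_def by (rule expectation_X2[OF P_supp])
  finally show ?thesis using a by (simp add: divide_right_mono power2_eq_square)
qed

lemma markov_N:
  assumes a: "0 < a" and n: "1 \<le> n"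
  shows "measure_pmf.prob (RR n) {S. a \<le> NN n S} \<le> (mu n)\<^sup>2 * exp (- (th n)\<^sup>2 / real (m n)) / a"
proof -
  have "measure_pmf.prob (RR n) {S. a \<le> NN n S} \<le> measure_pmf.expectation (RR n) (NN n) / a"
    by (rule markov_pmf[OF finRR a]) (simp add: NN_def)
  also have "measure_pmf.expectation (RR n) (NN n) \<le> (real n)\<^sup>2 * (qq n)\<^sup>2 * exp (- (th n)\<^sup>2 / real (m n))"
    unfolding RR_def NN_def qq_def
    by (rule expectation_N[OF P_supp _ th_nonneg[OF n]]) (use m_pos[of n] in simp)
  finally show ?thesis using a by (simp add: divide_right_mono mu_def power_mult_distrib)
qed

end

context rigc begin

lemma Vset_fin: "finite (Vset \<theta> n S)"
  by (rule finite_subset[of _ "{1..n}"]) (auto simp: Vset_def)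

lemma part2: "\<exists>\<xi>. o_P RR \<xi> \<and> (\<forall>\<^sub>F n in sequentially. \<forall>S \<in> set_pmf (RR n).
                 XX n S = (1 - \<xi> n S) * cc * K \<alpha> L n)"
proof (intro exI conjI)
  define \<xi> where "\<xi> n S = 1 - XX n S / (cc * K \<alpha> L n)" for n S
  show "\<forall>\<^sub>F n in sequentially. \<forall>S \<in> set_pmf (RR n). XX n S = (1 - \<xi> n S) * cc * K \<alpha> L n"
    using KK_pos by eventually_elim (use cc_pos in \<open>auto simp: \<xi>_def field_simps\<close>)
  show "o_P RR \<xi>"
    unfolding o_P_def
  proof (intro allI impI)
    fix \<epsilon> :: real assume \<epsilon>: "0 < \<epsilon>"
    define \<epsilon>' where "\<epsilon>' = min \<epsilon> 1"
    have \<epsilon>': "0 < \<epsilon>'" "\<epsilon>' \<le> \<epsilon>" "\<epsilon>' \<le> 1" using \<epsilon> by (auto simp: \<epsilon>'_def)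
    have ev1: "eventually (\<lambda>n. dist (mu n / (cc * K \<alpha> L n)) 1 < \<epsilon>'/2) sequentially"
      using mu_ratio \<epsilon>' by (intro tendstoD) auto
    have ev2: "eventually (\<lambda>n. 1 \<le> mu n) sequentially"
      using mu_lim by (simp add: filterlim_at_top)
    show "((\<lambda>n. measure_pmf.prob (RR n) {\<omega>. \<epsilon> < \<bar>\<xi> n \<omega>\<bar>}) \<longlongrightarrow> 0) sequentially"
    proof (rule tendsto_sandwich)
      show "eventually (\<lambda>n. 0 \<le> measure_pmf.prob (RR n) {\<omega>. \<epsilon> < \<bar>\<xi> n \<omega>\<bar>}) sequentially" by simp
      show "((\<lambda>n. 0) \<longlongrightarrow> (0::real)) sequentially" by simp
      have "((\<lambda>n. 16 / \<epsilon>'\<^sup>2 * inverse (mu n)) \<longlongrightarrow> 16 / \<epsilon>'\<^sup>2 * 0) sequentially"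
        by (intro tendsto_mult tendsto_const tendsto_inverse_0_at_top mu_lim)
      then show "((\<lambda>n. 16 / \<epsilon>'\<^sup>2 * inverse (mu n)) \<longlongrightarrow> 0) sequentially" by simp
      show "eventually (\<lambda>n. measure_pmf.prob (RR n) {\<omega>. \<epsilon> < \<bar>\<xi> n \<omega>\<bar>} \<le> 16 / \<epsilon>'\<^sup>2 * inverse (mu n)) sequentially"
        using ev1 ev2 KK_pos
      proof eventually_elim
        case (elim n)
        define D where "D = cc * K \<alpha> L n"
        have Dp: "0 < D" using elim cc_pos by (simp add: D_def)
        have mup: "1 \<le> mu n" using elim by simp
        have r: "\<bar>mu n / D - 1\<bar> < \<epsilon>'/2" using elim by (simp add: D_def dist_real_def)
        have r2: "\<bar>mu n - D\<bar> < \<epsilon>' * D / 2"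
        proof -
          have e: "mu n / D - 1 = (mu n - D) / D" using Dp by (simp add: diff_divide_distrib)
          have "\<bar>mu n - D\<bar> / D < \<epsilon>'/2" using r Dp unfolding e by (simp add: abs_divide)
          then have "\<bar>mu n - D\<bar> < \<epsilon>'/2 * D" using Dp by (simp add: pos_divide_less_eq)
          then show ?thesis by simp
        qed
        have r3: "mu n < 3/2 * D"
        proof -
          have "mu n / D < 1 + \<epsilon>'/2" using abs_less_iff[THEN iffD1, OF r] by linarith
          then have "mu n < (1 + \<epsilon>'/2) * D" using Dp by (simp add: pos_divide_less_eq)
          moreover have "(1 + \<epsilon>'/2) * D \<le> 3/2 * D" using \<epsilon>' Dp by (intro mult_right_mono) auto
          ultimately show ?thesis by linarith
        qed
        have sub: "{\<omega>. \<epsilon> < \<bar>\<xi> n \<omega>\<bar>} \<subseteq> {S. \<epsilon>' * mu n / 4 \<le> \<bar>XX n S - mu n\<bar>}"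
        proof
          fix S assume "S \<in> {\<omega>. \<epsilon> < \<bar>\<xi> n \<omega>\<bar>}"
          then have "\<epsilon>' < \<bar>\<xi> n S\<bar>" using \<epsilon>' by simp
          moreover have "\<bar>\<xi> n S\<bar> = \<bar>XX n S - D\<bar> / D"
          proof -
            have "\<xi> n S = (D - XX n S) / D" using Dp unfolding \<xi>_def D_def[symmetric] by (simp add: diff_divide_distrib)
            then show ?thesis using Dp by (simp add: abs_divide abs_minus_commute)
          qed
          ultimately have "\<epsilon>' * D < \<bar>XX n S - D\<bar>" using Dp by (simp add: pos_less_divide_eq)
          then have "\<epsilon>' * D / 2 < \<bar>XX n S - mu n\<bar>" using r2 by linarith
          moreover have "\<epsilon>' * mu n / 4 \<le> \<epsilon>' * D / 2"
          proof -
            have "mu n \<le> 2 * D" using r3 Dp by linarith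
            then have "\<epsilon>' * mu n \<le> \<epsilon>' * (2 * D)" using \<epsilon>' by (intro mult_left_mono) auto
            then show ?thesis by linarith
          qed
          ultimately show "S \<in> {S. \<epsilon>' * mu n / 4 \<le> \<bar>XX n S - mu n\<bar>}" by simp
        qed
        have "measure_pmf.prob (RR n) {\<omega>. \<epsilon> < \<bar>\<xi> n \<omega>\<bar>} \<le> measure_pmf.prob (RR n) {S. \<epsilon>' * mu n / 4 \<le> \<bar>XX n S - mu n\<bar>}"
          by (rule measure_pmf.finite_measure_mono[OF sub]) simp
        also have "\<dots> \<le> mu n / (\<epsilon>' * mu n / 4)\<^sup>2"
          by (rule cheb_X) (use \<epsilon>' mup in simp)
        also have "\<dots> = 16 / \<epsilon>'\<^sup>2 * inverse (mu n)"
          using mup \<epsilon>' by (simp add: field_simps power2_eq_square)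
        finally show ?case .
      qed
    qed
  qed
qed

lemma part1: "\<exists>\<xi>. o_P RR \<xi> \<and> (\<forall>\<^sub>F n in sequentially. \<forall>S \<in> set_pmf (RR n).
                 real (clique_number S (Vset (th n) n S)) = XX n S * (1 - \<xi> n S))"
proof (intro exI conjI)
  define \<xi> where "\<xi> n S = (if card (Vset (th n) n S) = 0 then 0
                   else 1 - real (clique_number S (Vset (th n) n S)) / XX n S)" for n S
  show "\<forall>\<^sub>F n in sequentially. \<forall>S \<in> set_pmf (RR n). real (clique_number S (Vset (th n) n S)) = XX n S * (1 - \<xi> n S)"
  proof (intro always_eventually allI ballI)
    fix n S
    show "real (clique_number S (Vset (th n) n S)) = XX n S * (1 - \<xi> n S)"
    proof (cases "card (Vset (th n) n S) = 0")
      case True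
      then have "clique_number S (Vset (th n) n S) = 0"
        using clique_bounds(2)[OF Vset_fin[of "th n" n S], of S] by simp
      then show ?thesis using True by (simp add: \<xi>_def XX_def)
    next
      case False
      then show ?thesis by (simp add: \<xi>_def XX_def field_simps)
    qed
  qed
  show "o_P RR \<xi>"
    unfolding o_P_def
  proof (intro allI impI)
    fix \<epsilon> :: real assume \<epsilon>: "0 < \<epsilon>"
    have ev2: "eventually (\<lambda>n. 1 \<le> mu n) sequentially"
      using mu_lim by (simp add: filterlim_at_top)
    have ev3: "eventually (\<lambda>n::nat. 1 \<le> n) sequentially" by (rule eventually_ge_at_top)
    show "((\<lambda>n. measure_pmf.prob (RR n) {\<omega>. \<epsilon> < \<bar>\<xi> n \<omega>\<bar>}) \<longlongrightarrow> 0) sequentially"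
    proof (rule tendsto_sandwich)
      show "eventually (\<lambda>n. 0 \<le> measure_pmf.prob (RR n) {\<omega>. \<epsilon> < \<bar>\<xi> n \<omega>\<bar>}) sequentially" by simp
      show "((\<lambda>n. 0) \<longlongrightarrow> (0::real)) sequentially" by simp
      have "((\<lambda>n. 4 * inverse (mu n) + 2 / \<epsilon> * (mu n * exp (- (th n)\<^sup>2 / real (m n)))) \<longlongrightarrow> 4 * 0 + 2 / \<epsilon> * 0) sequentially"
        by (intro tendsto_add tendsto_mult tendsto_const tendsto_inverse_0_at_top mu_lim mu_exp)
      then show "((\<lambda>n. 4 * inverse (mu n) + 2 / \<epsilon> * (mu n * exp (- (th n)\<^sup>2 / real (m n)))) \<longlongrightarrow> 0) sequentially" by simp
      show "eventually (\<lambda>n. measure_pmf.prob (RR n) {\<omega>. \<epsilon> < \<bar>\<xi> n \<omega>\<bar>}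
              \<le> 4 * inverse (mu n) + 2 / \<epsilon> * (mu n * exp (- (th n)\<^sup>2 / real (m n)))) sequentially"
        using ev2 ev3
      proof eventually_elim
        case (elim n)
        have mup: "1 \<le> mu n" and n1: "1 \<le> n" using elim by auto
        have sub: "{\<omega>. \<epsilon> < \<bar>\<xi> n \<omega>\<bar>} \<subseteq> {S. mu n / 2 \<le> \<bar>XX n S - mu n\<bar>} \<union> {S. \<epsilon> * mu n / 2 \<le> NN n S}"
        proof
          fix S assume S: "S \<in> {\<omega>. \<epsilon> < \<bar>\<xi> n \<omega>\<bar>}"
          show "S \<in> {S. mu n / 2 \<le> \<bar>XX n S - mu n\<bar>} \<union> {S. \<epsilon> * mu n / 2 \<le> NN n S}"
          proof (rule ccontr)
            assume "\<not> ?thesis"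
            then have a: "\<bar>XX n S - mu n\<bar> < mu n / 2" "NN n S < \<epsilon> * mu n / 2" by auto
            have Xp: "mu n / 2 < XX n S" using abs_less_iff[THEN iffD1, OF a(1)] by linarith
            then have c0: "card (Vset (th n) n S) \<noteq> 0" using mup by (auto simp: XX_def)
            have lb: "XX n S - NN n S \<le> real (clique_number S (Vset (th n) n S))"
              using clique_bounds(1)[OF Vset_fin[of "th n" n S], of S] by (simp add: XX_def NN_def)
            have ub: "real (clique_number S (Vset (th n) n S)) \<le> XX n S"
              using clique_bounds(2)[OF Vset_fin[of "th n" n S], of S] by (simp add: XX_def)
            have Xp': "0 < XX n S" using Xp mup by linarith
            have xi: "\<xi> n S = (XX n S - real (clique_number S (Vset (th n) n S))) / XX n S"
              using c0 Xp' by (simp add: \<xi>_def field_simps)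
            have "0 \<le> \<xi> n S" unfolding xi using ub Xp' by simp
            moreover have "\<xi> n S \<le> NN n S / XX n S" unfolding xi using lb Xp'
              by (intro divide_right_mono) auto
            moreover have "NN n S / XX n S \<le> \<epsilon>"
            proof -
              have "\<epsilon> * (mu n / 2) < \<epsilon> * XX n S" by (rule mult_strict_left_mono[OF Xp \<epsilon>])
              then have "NN n S \<le> \<epsilon> * XX n S" using a(2) by linarith
              then show ?thesis using Xp' by (simp add: divide_le_eq)
            qed
            ultimately have "\<bar>\<xi> n S\<bar> \<le> \<epsilon>" by simp
            then show False using S by simp
          qed
        qed
        have "measure_pmf.prob (RR n) {\<omega>. \<epsilon> < \<bar>\<xi> n \<omega>\<bar>}
            \<le> measure_pmf.prob (RR n) ({S. mu n / 2 \<le> \<bar>XX n S - mu n\<bar>} \<union> {S. \<epsilon> * mu n / 2 \<le> NN n S})"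
          by (rule measure_pmf.finite_measure_mono[OF sub]) simp
        also have "\<dots> \<le> measure_pmf.prob (RR n) {S. mu n / 2 \<le> \<bar>XX n S - mu n\<bar>} + measure_pmf.prob (RR n) {S. \<epsilon> * mu n / 2 \<le> NN n S}"
          by (rule measure_Un_le) simp_all
        also have "measure_pmf.prob (RR n) {S. mu n / 2 \<le> \<bar>XX n S - mu n\<bar>} \<le> mu n / (mu n / 2)\<^sup>2"
          by (rule cheb_X) (use mup in simp)
        also have "measure_pmf.prob (RR n) {S. \<epsilon> * mu n / 2 \<le> NN n S} \<le> (mu n)\<^sup>2 * exp (- (th n)\<^sup>2 / real (m n)) / (\<epsilon> * mu n / 2)"
          by (rule markov_N[OF _ n1]) (use mup \<epsilon> in simp)
        also have "mu n / (mu n / 2)\<^sup>2 + (mu n)\<^sup>2 * exp (- (th n)\<^sup>2 / real (m n)) / (\<epsilon> * mu n / 2)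
            = 4 * inverse (mu n) + 2 / \<epsilon> * (mu n * exp (- (th n)\<^sup>2 / real (m n)))"
          using mup \<epsilon> by (simp add: field_simps power2_eq_square)
        finally show ?case by simp
      qed
    qed
  qed
qed

end

theorem mainTheorem6:
  fixes \<alpha> \<epsilon>0 \<epsilon>1 :: real and L :: "real \<Rightarrow> real"
    and m :: "nat \<Rightarrow> nat" and P :: "nat \<Rightarrow> nat pmf"
  assumes alpha: "1 < \<alpha>" "\<alpha> < 2"
    and eps0: "0 < \<epsilon>0" "\<epsilon>0 < 1/2"
    and eps1: "0 < \<epsilon>1" "\<epsilon>1 < \<epsilon>0"
    and m_pos: "\<And>n. m n \<ge> 1"
    and m_inf: "filterlim m at_top at_top"
    and P_supp: "\<And>n. set_pmf (P n) \<subseteq> {0..m n}"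
    and L_sv: "slowly_varying L"
    and condA: "(\<lambda>n. measure_pmf.expectation (P n)
                     (\<lambda>k. sqrt (real n / real (m n)) * real k)) \<in> O(\<lambda>_. 1)"
    and condPL: "\<And>x :: nat \<Rightarrow> real.
        (\<And>n. real n powr (1/2 - \<epsilon>0) \<le> x n \<and> x n \<le> real n powr (1/2 + \<epsilon>0)) \<Longrightarrow>
        (\<lambda>n. measure_pmf.prob (P n) {k. sqrt (real n / real (m n)) * real k \<ge> x n})
          \<sim>[sequentially] (\<lambda>n. L (x n) * x n powr (- \<alpha>))"
  shows "(\<exists>\<xi>. o_P (\<lambda>n. RIG n (m n) (P n)) \<xi> \<and>
            (\<forall>\<^sub>F n in sequentially. \<forall>S \<in> set_pmf (RIG n (m n) (P n)).
               real (clique_number S (V2 \<alpha> L n (m n) S))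
                 = real (card (V2 \<alpha> L n (m n) S)) * (1 - \<xi> n S)))
       \<and> (\<exists>\<xi>. o_P (\<lambda>n. RIG n (m n) (P n)) \<xi> \<and>
            (\<forall>\<^sub>F n in sequentially. \<forall>S \<in> set_pmf (RIG n (m n) (P n)).
               real (card (V2 \<alpha> L n (m n) S))
                 = (1 - \<xi> n S) * (1 - \<alpha>/2) powr (- \<alpha>/2) * K \<alpha> L n))"
proof -
  interpret R: rigc \<alpha> \<epsilon>0 L m P
    using alpha eps0 m_pos P_supp L_sv condPL by unfold_locales auto
  have eqR: "(\<lambda>n. RIG n (m n) (P n)) = R.RR" by (simp add: fun_eq_iff RIG_def R.RR_def)
  have eqV: "\<And>n S. V2 \<alpha> L n (m n) S = Vset (R.th n) n S" by (simp add: V2_def Vset_def R.th_def)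
  have eqc: "(1 - \<alpha>/2) powr (- \<alpha>/2) = R.cc" by (simp add: R.cc_def)
  have "\<And>n. RIG n (m n) (P n) = R.RR n" using eqR by metis
  note eqs = this eqV eqc
  obtain \<xi>1 where x1: "o_P R.RR \<xi>1" "\<forall>\<^sub>F n in sequentially. \<forall>S \<in> set_pmf (R.RR n).
                 real (clique_number S (Vset (R.th n) n S)) = R.XX n S * (1 - \<xi>1 n S)"
    using R.part1 by blast
  obtain \<xi>2 where x2: "o_P R.RR \<xi>2" "\<forall>\<^sub>F n in sequentially. \<forall>S \<in> set_pmf (R.RR n).
                 R.XX n S = (1 - \<xi>2 n S) * R.cc * K \<alpha> L n"
    using R.part2 by blast
  show ?thesis
  proof (intro conjI exI)
    show "o_P (\<lambda>n. RIG n (m n) (P n)) \<xi>1" using x1(1) eqR by simp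
    show "o_P (\<lambda>n. RIG n (m n) (P n)) \<xi>2" using x2(1) eqR by simp
    show "\<forall>\<^sub>F n in sequentially. \<forall>S \<in> set_pmf (RIG n (m n) (P n)).
               real (clique_number S (V2 \<alpha> L n (m n) S))
                 = real (card (V2 \<alpha> L n (m n) S)) * (1 - \<xi>1 n S)"
      using x1(2) by (simp add: eqs R.XX_def)
    show "\<forall>\<^sub>F n in sequentially. \<forall>S \<in> set_pmf (RIG n (m n) (P n)).
               real (card (V2 \<alpha> L n (m n) S))
                 = (1 - \<xi>2 n S) * (1 - \<alpha>/2) powr (- \<alpha>/2) * K \<alpha> L n"
      using x2(2) by (simp add: eqs R.XX_def R.cc_def)
  qed
qed

end
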